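(* Let $M$ be a matroid on $E=[n]$, $t,u$ positive integers, and $\mathcal F$ the regular mixed subdivision of $u\Delta+P(M)+t\nabla$ defined below. Every lattice point of $u\Delta+P(M)+t\nabla$ lies in some top-degree face of $\mathcal F$.
   Context: $M$ is a matroid on $E=[n]=\{1,\dots,n\}$, ordered naturally. $P(M)\subseteq\mathbb R^E$ is the convex hull of the indicator vectors $\mathbf e_B$ of bases $B$. For nonempty $S\subseteq E$, $\Delta_S=\operatorname{conv}\{\mathbf e_i:i\in S\}$, $\nabla_S=-\Delta_S$, $\Delta=\Delta_E$, $\nabla=\nabla_E$. The subdivision: fix positive integers $t,u$ and reals $0<\alpha_1<\dots<\alpha_n$, $0<\beta_1<\dots<\beta_n$. Let $\mathit{Lift}=\operatorname{conv}\{(u\mathbf e_i,\alpha_i)\}+(P(M)\times\{0\})+\operatorname{conv}\{(-t\mathbf e_i,\beta_i)\}\subseteq\mathbb R^E\times\mathbb R$. The lower faces of $\mathit{Lift}$ are the faces on which some linear functional with last coordinate $-1$ attains its maximum; their projections to $\mathbb R^E$ form the regular mixed subdivision $\mathcal F$ of $u\Delta+P(M)+t\nabla$. Each cell is canonically written $F+G+H$ where $F$, $G$, $H$ are the projections of the faces of the three summands of $\mathit{Lift}$ maximizing the same functional, so $F$ is a face of $u\Delta$, $G$ a face of $P(M)$, $H$ a face of $t\nabla$. A top-degree face is a maximal cell $F+G+H$ of $\mathcal F$ in which $G$ is a vertex of $P(M)$. *)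

theory Defs
  imports Complex_Main
begin

text \<open>Points of R^E, E = {1..n}, are represented as functions nat => real
  (coordinates outside E are 0 for all points that occur).  Points of R^E x R
  (the lifting space) are pairs.\<close>

type_synonym vec = "nat \<Rightarrow> real"
type_synonym lvec = "(nat \<Rightarrow> real) \<times> real"

definition ground :: "nat \<Rightarrow> nat set" where
  "ground n = {1..n}"

definition matroid_bases :: "nat \<Rightarrow> nat set set \<Rightarrow> bool" where
  "matroid_bases n \<B> \<longleftrightarrow>
     \<B> \<noteq> {} \<and> (\<forall>B\<in>\<B>. B \<subseteq> ground n) \<and>
     (\<forall>B1\<in>\<B>. \<forall>B2\<in>\<B>. \<forall>x\<in>B1 - B2. \<exists>y\<in>B2 - B1. insert y (B1 - {x}) \<in> \<B>)"

definition unitv :: "nat \<Rightarrow> vec" where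
  "unitv i = (\<lambda>j. if j = i then 1 else 0)"

definition indic :: "nat set \<Rightarrow> vec" where
  "indic B = (\<lambda>j. if j \<in> B then 1 else 0)"

definition conv :: "vec set \<Rightarrow> vec set" where
  "conv A = {y. \<exists>S c. finite S \<and> S \<subseteq> A \<and> S \<noteq> {} \<and> (\<forall>a\<in>S. c a \<ge> 0) \<and> sum c S = 1 \<and>
                    y = (\<lambda>i. \<Sum>a\<in>S. c a * a i)}"

definition lconv :: "lvec set \<Rightarrow> lvec set" where
  "lconv A = {y. \<exists>S c. finite S \<and> S \<subseteq> A \<and> S \<noteq> {} \<and> (\<forall>a\<in>S. c a \<ge> 0) \<and> sum c S = 1 \<and>
                    y = ((\<lambda>i. \<Sum>a\<in>S. c a * fst a i), (\<Sum>a\<in>S. c a * snd a))}"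

definition msum :: "vec set \<Rightarrow> vec set \<Rightarrow> vec set" where
  "msum A B = {(\<lambda>i. a i + b i) | a b. a \<in> A \<and> b \<in> B}"

definition lmsum :: "lvec set \<Rightarrow> lvec set \<Rightarrow> lvec set" where
  "lmsum A B = {((\<lambda>i. fst a i + fst b i), snd a + snd b) | a b. a \<in> A \<and> b \<in> B}"

definition matroid_polytope :: "nat set set \<Rightarrow> vec set" where
  "matroid_polytope \<B> = conv (indic ` \<B>)"

definition simplex :: "nat \<Rightarrow> vec set" where
  "simplex n = conv (unitv ` ground n)"

definition scale_set :: "real \<Rightarrow> vec set \<Rightarrow> vec set" where
  "scale_set r A = (\<lambda>a i. r * a i) ` A"

definition lfun :: "nat \<Rightarrow> vec \<Rightarrow> lvec \<Rightarrow> real" where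
  "lfun n w p = (\<Sum>i\<in>ground n. w i * fst p i) - snd p"

definition argmax_face :: "(lvec \<Rightarrow> real) \<Rightarrow> lvec set \<Rightarrow> lvec set" where
  "argmax_face f S = {x\<in>S. \<forall>y\<in>S. f y \<le> f x}"

definition lift_Delta :: "nat \<Rightarrow> nat \<Rightarrow> vec \<Rightarrow> lvec set" where
  "lift_Delta n u \<alpha> = lconv ((\<lambda>i. (\<lambda>j. real u * unitv i j, \<alpha> i)) ` ground n)"

definition lift_P :: "nat set set \<Rightarrow> lvec set" where
  "lift_P \<B> = (\<lambda>x. (x, 0)) ` matroid_polytope \<B>"

definition lift_Nabla :: "nat \<Rightarrow> nat \<Rightarrow> vec \<Rightarrow> lvec set" where
  "lift_Nabla n t \<beta> = lconv ((\<lambda>i. (\<lambda>j. - real t * unitv i j, \<beta> i)) ` ground n)"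

definition Lift :: "nat \<Rightarrow> nat set set \<Rightarrow> nat \<Rightarrow> nat \<Rightarrow> vec \<Rightarrow> vec \<Rightarrow> lvec set" where
  "Lift n \<B> t u \<alpha> \<beta> = lmsum (lmsum (lift_Delta n u \<alpha>) (lift_P \<B>)) (lift_Nabla n t \<beta>)"

text \<open>The lower face of Lift maximised by the functional (w,-1), projected to R^E:
  a cell of the regular mixed subdivision.\<close>
definition cell :: "nat \<Rightarrow> nat set set \<Rightarrow> nat \<Rightarrow> nat \<Rightarrow> vec \<Rightarrow> vec \<Rightarrow> vec \<Rightarrow> vec set" where
  "cell n \<B> t u \<alpha> \<beta> w = fst ` argmax_face (lfun n w) (Lift n \<B> t u \<alpha> \<beta>)"

text \<open>The G-part of the canonical decomposition F+G+H of the cell for w.\<close>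
definition cellG :: "nat \<Rightarrow> nat set set \<Rightarrow> vec \<Rightarrow> vec set" where
  "cellG n \<B> w = fst ` argmax_face (lfun n w) (lift_P \<B>)"

definition cellF :: "nat \<Rightarrow> nat \<Rightarrow> vec \<Rightarrow> vec \<Rightarrow> vec set" where
  "cellF n u \<alpha> w = fst ` argmax_face (lfun n w) (lift_Delta n u \<alpha>)"

definition cellH :: "nat \<Rightarrow> nat \<Rightarrow> vec \<Rightarrow> vec \<Rightarrow> vec set" where
  "cellH n t \<beta> w = fst ` argmax_face (lfun n w) (lift_Nabla n t \<beta>)"

definition subdivision :: "nat \<Rightarrow> nat set set \<Rightarrow> nat \<Rightarrow> nat \<Rightarrow> vec \<Rightarrow> vec \<Rightarrow> vec set set" where
  "subdivision n \<B> t u \<alpha> \<beta> = range (cell n \<B> t u \<alpha> \<beta>)"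

definition top_degree_face :: "nat \<Rightarrow> nat set set \<Rightarrow> nat \<Rightarrow> nat \<Rightarrow> vec \<Rightarrow> vec \<Rightarrow> vec set \<Rightarrow> bool" where
  "top_degree_face n \<B> t u \<alpha> \<beta> C \<longleftrightarrow>
     C \<in> subdivision n \<B> t u \<alpha> \<beta> \<and>
     (\<forall>C'\<in>subdivision n \<B> t u \<alpha> \<beta>. C \<subseteq> C' \<longrightarrow> C' = C) \<and>
     (\<exists>w. C = cell n \<B> t u \<alpha> \<beta> w \<and> (\<exists>B\<in>\<B>. cellG n \<B> w = {indic B}))"

definition mixed_polytope :: "nat \<Rightarrow> nat set set \<Rightarrow> nat \<Rightarrow> nat \<Rightarrow> vec set" where
  "mixed_polytope n \<B> t u =
     msum (msum (scale_set (real u) (simplex n)) (matroid_polytope \<B>))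
          (scale_set (- real t) (simplex n))"

end

theory Submission
  imports Defs
begin

lemma ground_simps: "finite (ground n)" "ground (Suc n) = insert (Suc n) (ground n)"
  "Suc n \<notin> ground n" "ground 0 = {}"
  by (auto simp: ground_def)

lemma mb_sub: "matroid_bases n \<B> \<Longrightarrow> B \<in> \<B> \<Longrightarrow> B \<subseteq> ground n"
  by (auto simp: matroid_bases_def)

lemma mb_fin: "matroid_bases n \<B> \<Longrightarrow> B \<in> \<B> \<Longrightarrow> finite B"
  by (rule finite_subset[OF mb_sub ground_simps(1)])

lemma mb_exch: "matroid_bases n \<B> \<Longrightarrow> B1 \<in> \<B> \<Longrightarrow> B2 \<in> \<B> \<Longrightarrow> x \<in> B1 - B2
   \<Longrightarrow> \<exists>y\<in>B2 - B1. insert y (B1 - {x}) \<in> \<B>"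
  unfolding matroid_bases_def by blast

lemma L1:
  assumes mb: "matroid_bases n \<B>" and D: "D \<in> \<B>" "k \<in> D" and B: "B \<in> \<B>" "k \<notin> B"
  shows "\<exists>e\<in>B. insert k (B - {e}) \<in> \<B>"
  using D
proof (induction "card (D - B)" arbitrary: D rule: less_induct)
  case less
  show ?case
  proof (cases "\<exists>z\<in>D - B. z \<noteq> k")
    case True
    then obtain z where z: "z \<in> D - B" "z \<noteq> k" by blast
    obtain y where y: "y \<in> B - D" "insert y (D - {z}) \<in> \<B>"
      using mb_exch[OF mb less.prems(1) B(1) z(1)] by blast
    have eq: "insert y (D - {z}) - B = (D - B) - {z}" using y by auto
    have fin: "finite (D - B)" using mb_fin[OF mb less.prems(1)] by auto
    have "card ((D - B) - {z}) < card (D - B)"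
      using z fin by (meson card_Diff1_less)
    then have lt: "card (insert y (D - {z}) - B) < card (D - B)" using eq by simp
    have kin: "k \<in> insert y (D - {z})" using z less.prems by auto
    show ?thesis by (rule less.hyps[OF lt y(2) kin])
  next
    case False
    then have DB: "D - B = {k}" using less.prems B by blast
    obtain y where y: "y \<in> B - D" using mb_exch[OF mb less.prems(1) B(1), of k] less.prems B by auto
    obtain y' where y': "y' \<in> D - B" "insert y' (B - {y}) \<in> \<B>"
      using mb_exch[OF mb B(1) less.prems(1) y] by blast
    then show ?thesis using DB y by auto
  qed
qed

lemma equicard:
  assumes mb: "matroid_bases n \<B>" and B1: "B1 \<in> \<B>" and B2: "B2 \<in> \<B>"
  shows "card B1 = card B2"
  using B1
proof (induction "card (B1 - B2)" arbitrary: B1 rule: less_induct)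
  case less
  show ?case
  proof (cases "B1 - B2 = {}")
    case True
    have "B2 - B1 = {}"
    proof (rule ccontr)
      assume "B2 - B1 \<noteq> {}"
      then obtain z where "z \<in> B2 - B1" by blast
      then show False using mb_exch[OF mb B2 less.prems] True by auto
    qed
    then show ?thesis using True by (metis Diff_eq_empty_iff subset_antisym)
  next
    case False
    then obtain z where z: "z \<in> B1 - B2" by blast
    obtain y where y: "y \<in> B2 - B1" "insert y (B1 - {z}) \<in> \<B>"
      using mb_exch[OF mb less.prems B2 z] by blast
    have f1: "finite B1" using mb_fin[OF mb less.prems] .
    have "card (insert y (B1 - {z})) = Suc (card (B1 - {z}))"
      by (rule card_insert_disjoint) (use f1 y in auto)
    also have "\<dots> = card B1" by (rule card_Suc_Diff1[OF f1]) (use z in auto)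
    finally have c1: "card (insert y (B1 - {z})) = card B1" .
    have eq: "insert y (B1 - {z}) - B2 = (B1 - B2) - {z}" using y by auto
    have "card ((B1 - B2) - {z}) < card (B1 - B2)"
      using z f1 by (meson card_Diff1_less finite_Diff)
    then have lt: "card (insert y (B1 - {z}) - B2) < card (B1 - B2)" using eq by simp
    have "card (insert y (B1 - {z})) = card B2" by (rule less.hyps[OF lt y(2)])
    then show ?thesis using c1 by simp
  qed
qed

lemma del_mb:
  assumes mb: "matroid_bases (Suc n) \<B>" and ex: "\<exists>D\<in>\<B>. Suc n \<notin> D"
  shows "matroid_bases n {D\<in>\<B>. Suc n \<notin> D}"
  unfolding matroid_bases_def
proof (intro conjI ballI)
  show "{D \<in> \<B>. Suc n \<notin> D} \<noteq> {}" using ex by auto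
next
  fix B assume B: "B \<in> {D \<in> \<B>. Suc n \<notin> D}"
  show "B \<subseteq> ground n"
  proof
    fix x assume x: "x \<in> B"
    then have "x \<in> ground (Suc n)" using mb_sub[OF mb, of B] B by auto
    moreover have "x \<noteq> Suc n" using x B by blast
    ultimately show "x \<in> ground n" by (auto simp: ground_def)
  qed
next
  fix B1 B2 x assume a: "B1 \<in> {D \<in> \<B>. Suc n \<notin> D}" "B2 \<in> {D \<in> \<B>. Suc n \<notin> D}" "x \<in> B1 - B2"
  then obtain y where "y \<in> B2 - B1" "insert y (B1 - {x}) \<in> \<B>" using mb_exch[OF mb] by blast
  then show "\<exists>y\<in>B2 - B1. insert y (B1 - {x}) \<in> {D \<in> \<B>. Suc n \<notin> D}" using a by auto
qed

lemma con_mb: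
  assumes mb: "matroid_bases (Suc n) \<B>" and ex: "\<exists>D\<in>\<B>. Suc n \<in> D"
  shows "matroid_bases n ((\<lambda>D. D - {Suc n}) ` {D\<in>\<B>. Suc n \<in> D})"
  unfolding matroid_bases_def
proof (intro conjI ballI)
  show "(\<lambda>D. D - {Suc n}) ` {D\<in>\<B>. Suc n \<in> D} \<noteq> {}" using ex by auto
next
  fix B assume "B \<in> (\<lambda>D. D - {Suc n}) ` {D\<in>\<B>. Suc n \<in> D}"
  then show "B \<subseteq> ground n" using mb_sub[OF mb] by (fastforce simp: ground_def)
next
  fix B1 B2 x assume a: "B1 \<in> (\<lambda>D. D - {Suc n}) ` {D\<in>\<B>. Suc n \<in> D}"
    "B2 \<in> (\<lambda>D. D - {Suc n}) ` {D\<in>\<B>. Suc n \<in> D}" "x \<in> B1 - B2"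
  then obtain D1 D2 where d: "D1 \<in> \<B>" "Suc n \<in> D1" "B1 = D1 - {Suc n}"
     "D2 \<in> \<B>" "Suc n \<in> D2" "B2 = D2 - {Suc n}" by auto
  have "x \<in> D1 - D2" using a d by auto
  then obtain y where y: "y \<in> D2 - D1" "insert y (D1 - {x}) \<in> \<B>" using mb_exch[OF mb d(1) d(4)] by blast
  have "insert y (B1 - {x}) = insert y (D1 - {x}) - {Suc n}" using y d a by auto
  moreover have "Suc n \<in> insert y (D1 - {x})" using d a by auto
  ultimately have "insert y (B1 - {x}) \<in> (\<lambda>D. D - {Suc n}) ` {D\<in>\<B>. Suc n \<in> D}" using y by auto
  then show "\<exists>y\<in>B2 - B1. insert y (B1 - {x}) \<in> (\<lambda>D. D - {Suc n}) ` {D\<in>\<B>. Suc n \<in> D}"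
    using y d by auto
qed

lemma none_mb:
  assumes mb: "matroid_bases (Suc n) \<B>" and no: "\<forall>D\<in>\<B>. Suc n \<notin> D"
  shows "matroid_bases n \<B>"
proof -
  have "{D\<in>\<B>. Suc n \<notin> D} = \<B>" using no by auto
  moreover have "\<exists>D\<in>\<B>. Suc n \<notin> D" using no mb by (auto simp: matroid_bases_def)
  ultimately show ?thesis using del_mb[OF mb] by metis
qed

lemma conv_gen:
  fixes I :: "'a set" and c :: "'a \<Rightarrow> real" and f :: "'a \<Rightarrow> vec"
  assumes fin: "finite I" and ne: "I \<noteq> {}" and c0: "\<forall>i\<in>I. c i \<ge> 0" and c1: "sum c I = 1"
    and fA: "f ` I \<subseteq> A"
  shows "(\<lambda>j. \<Sum>i\<in>I. c i * f i j) \<in> conv A"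
proof -
  define c' where "c' v = sum c {i. i \<in> I \<and> f i = v}" for v
  have eq: "(\<lambda>j. \<Sum>i\<in>I. c i * f i j) = (\<lambda>j. \<Sum>v\<in>f ` I. c' v * v j)"
  proof
    fix j
    have "(\<Sum>i\<in>I. c i * f i j) = (\<Sum>v\<in>f ` I. \<Sum>i\<in>{i. i \<in> I \<and> f i = v}. c i * f i j)"
      using sum.image_gen[OF fin, of "\<lambda>i. c i * f i j" f] by simp
    also have "\<dots> = (\<Sum>v\<in>f ` I. c' v * v j)"
      unfolding c'_def by (rule sum.cong) (auto simp: sum_distrib_right intro!: sum.cong)
    finally show "(\<Sum>i\<in>I. c i * f i j) = (\<Sum>v\<in>f ` I. c' v * v j)" .
  qed
  have "sum c' (f ` I) = 1"
    using sum.image_gen[OF fin, of c f] c1 unfolding c'_def by simp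
  moreover have "\<forall>v\<in>f ` I. c' v \<ge> 0" unfolding c'_def using c0 by (auto intro!: sum_nonneg)
  ultimately show ?thesis unfolding conv_def eq using fin ne fA
    by (intro CollectI exI[of _ "f ` I"] exI[of _ c']) auto
qed

lemma lconv_gen:
  fixes I :: "'a set" and c :: "'a \<Rightarrow> real" and f :: "'a \<Rightarrow> lvec"
  assumes fin: "finite I" and ne: "I \<noteq> {}" and c0: "\<forall>i\<in>I. c i \<ge> 0" and c1: "sum c I = 1"
    and fA: "f ` I \<subseteq> A"
  shows "((\<lambda>j. \<Sum>i\<in>I. c i * fst (f i) j), \<Sum>i\<in>I. c i * snd (f i)) \<in> lconv A"
proof -
  define c' where "c' v = sum c {i. i \<in> I \<and> f i = v}" for v
  have eq: "(\<lambda>j. \<Sum>i\<in>I. c i * fst (f i) j) = (\<lambda>j. \<Sum>v\<in>f ` I. c' v * fst v j)"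
  proof
    fix j
    have "(\<Sum>i\<in>I. c i * fst (f i) j) = (\<Sum>v\<in>f ` I. \<Sum>i\<in>{i. i \<in> I \<and> f i = v}. c i * fst (f i) j)"
      using sum.image_gen[OF fin, of "\<lambda>i. c i * fst (f i) j" f] by simp
    also have "\<dots> = (\<Sum>v\<in>f ` I. c' v * fst v j)"
      unfolding c'_def by (rule sum.cong) (auto simp: sum_distrib_right intro!: sum.cong)
    finally show "(\<Sum>i\<in>I. c i * fst (f i) j) = (\<Sum>v\<in>f ` I. c' v * fst v j)" .
  qed
  have eq2: "(\<Sum>i\<in>I. c i * snd (f i)) = (\<Sum>v\<in>f ` I. c' v * snd v)"
  proof -
    have "(\<Sum>i\<in>I. c i * snd (f i)) = (\<Sum>v\<in>f ` I. \<Sum>i\<in>{i. i \<in> I \<and> f i = v}. c i * snd (f i))"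
      using sum.image_gen[OF fin, of "\<lambda>i. c i * snd (f i)" f] by simp
    also have "\<dots> = (\<Sum>v\<in>f ` I. c' v * snd v)"
      unfolding c'_def by (rule sum.cong) (auto simp: sum_distrib_right intro!: sum.cong)
    finally show ?thesis .
  qed
  have "sum c' (f ` I) = 1"
    using sum.image_gen[OF fin, of c f] c1 unfolding c'_def by simp
  moreover have "\<forall>v\<in>f ` I. c' v \<ge> 0" unfolding c'_def using c0 by (auto intro!: sum_nonneg)
  ultimately show ?thesis unfolding lconv_def eq eq2 using fin ne fA
    by (intro CollectI exI[of _ "f ` I"] exI[of _ c']) auto
qed

definition Qc :: "nat \<Rightarrow> vec \<Rightarrow> real \<Rightarrow> real \<Rightarrow> vec \<Rightarrow> bool" where
 "Qc n x U V p \<longleftrightarrow> (\<Sum>i\<in>ground n. max (x i - p i) 0) \<le> U \<and> (\<Sum>i\<in>ground n. max (p i - x i) 0) \<le> V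
     \<and> (\<Sum>i\<in>ground n. x i - p i) = U - V"

definition rep :: "nat set set \<Rightarrow> vec set \<Rightarrow> (vec \<Rightarrow> real) \<Rightarrow> (vec \<Rightarrow> nat set) \<Rightarrow> bool" where
 "rep \<B> I c f \<longleftrightarrow> finite I \<and> I \<noteq> {} \<and> (\<forall>v\<in>I. 0 \<le> c v) \<and> sum c I = 1 \<and> (\<forall>v\<in>I. f v \<in> \<B>)"

definition pt :: "vec set \<Rightarrow> (vec \<Rightarrow> real) \<Rightarrow> (vec \<Rightarrow> nat set) \<Rightarrow> vec" where
 "pt I c f = (\<lambda>j. \<Sum>v\<in>I. c v * indic (f v) j)"

definition Qh :: "nat \<Rightarrow> nat set set \<Rightarrow> vec \<Rightarrow> real \<Rightarrow> real \<Rightarrow> bool" where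
 "Qh n \<B> x U V \<longleftrightarrow> (\<exists>I c f. rep \<B> I c f \<and> Qc n x U V (pt I c f))"

lemma indic_01: "0 \<le> indic D j" "indic D j \<le> 1" by (auto simp: indic_def)

lemma pt_bounds: assumes "rep \<B> I c f" shows "0 \<le> pt I c f j" "pt I c f j \<le> 1"
proof -
  show "0 \<le> pt I c f j" using assms unfolding rep_def pt_def by (auto intro!: sum_nonneg simp: indic_def)
  have "pt I c f j \<le> (\<Sum>v\<in>I. c v)" unfolding pt_def
    using assms unfolding rep_def by (intro sum_mono) (auto simp: indic_def)
  then show "pt I c f j \<le> 1" using assms unfolding rep_def by simp
qed

lemma Qc_up:
  assumes Q: "Qc (Suc n) x U V p" and pk: "p (Suc n) \<le> x (Suc n)"
    and le: "\<forall>j\<in>ground n. p' j \<le> p j" and s: "(\<Sum>j\<in>ground n. p j - p' j) = e - p (Suc n)"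
  shows "Qc n x (U - (x (Suc n) - e)) V p'"
proof -
  let ?k = "Suc n"
  have g: "ground ?k = insert ?k (ground n)" "?k \<notin> ground n" "finite (ground n)" using ground_simps by auto
  have Q1: "max (x ?k - p ?k) 0 + (\<Sum>i\<in>ground n. max (x i - p i) 0) \<le> U"
    using Q g unfolding Qc_def by simp
  have Q2: "max (p ?k - x ?k) 0 + (\<Sum>i\<in>ground n. max (p i - x i) 0) \<le> V"
    using Q g unfolding Qc_def by simp
  have Q3: "(x ?k - p ?k) + (\<Sum>i\<in>ground n. x i - p i) = U - V"
    using Q g unfolding Qc_def by simp
  have a: "(\<Sum>i\<in>ground n. max (x i - p' i) 0) \<le> (\<Sum>i\<in>ground n. max (x i - p i) 0 + (p i - p' i))"
    using le by (intro sum_mono) auto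
  have a2: "(\<Sum>i\<in>ground n. max (x i - p i) 0 + (p i - p' i)) = (\<Sum>i\<in>ground n. max (x i - p i) 0) + (e - p ?k)"
    using s by (simp add: sum.distrib)
  have b: "(\<Sum>i\<in>ground n. max (p' i - x i) 0) \<le> (\<Sum>i\<in>ground n. max (p i - x i) 0)"
    using le by (intro sum_mono) auto
  have c: "(\<Sum>i\<in>ground n. x i - p' i) = (\<Sum>i\<in>ground n. x i - p i) + (e - p ?k)"
    using s unfolding sum_subtractf by linarith
  have m1: "max (x ?k - p ?k) 0 = x ?k - p ?k" using pk by simp
  have m2: "max (p ?k - x ?k) 0 \<ge> 0" by simp
  show ?thesis unfolding Qc_def using a a2 b c m1 m2 Q1 Q2 Q3 by linarith
qed

lemma Qc_down:
  assumes Q: "Qc (Suc n) x U V p" and pk: "x (Suc n) \<le> p (Suc n)"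
    and le: "\<forall>j\<in>ground n. p j \<le> p' j" and s: "(\<Sum>j\<in>ground n. p' j - p j) = p (Suc n) - e"
  shows "Qc n x U (V - (e - x (Suc n))) p'"
proof -
  let ?k = "Suc n"
  have g: "ground ?k = insert ?k (ground n)" "?k \<notin> ground n" "finite (ground n)" using ground_simps by auto
  have Q1: "max (x ?k - p ?k) 0 + (\<Sum>i\<in>ground n. max (x i - p i) 0) \<le> U"
    using Q g unfolding Qc_def by simp
  have Q2: "max (p ?k - x ?k) 0 + (\<Sum>i\<in>ground n. max (p i - x i) 0) \<le> V"
    using Q g unfolding Qc_def by simp
  have Q3: "(x ?k - p ?k) + (\<Sum>i\<in>ground n. x i - p i) = U - V"
    using Q g unfolding Qc_def by simp
  have a: "(\<Sum>i\<in>ground n. max (p' i - x i) 0) \<le> (\<Sum>i\<in>ground n. max (p i - x i) 0 + (p' i - p i))"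
    using le by (intro sum_mono) auto
  have a2: "(\<Sum>i\<in>ground n. max (p i - x i) 0 + (p' i - p i)) = (\<Sum>i\<in>ground n. max (p i - x i) 0) + (p ?k - e)"
    using s by (simp add: sum.distrib)
  have b: "(\<Sum>i\<in>ground n. max (x i - p' i) 0) \<le> (\<Sum>i\<in>ground n. max (x i - p i) 0)"
    using le by (intro sum_mono) auto
  have c: "(\<Sum>i\<in>ground n. x i - p' i) = (\<Sum>i\<in>ground n. x i - p i) - (p ?k - e)"
    using s unfolding sum_subtractf by linarith
  have m1: "max (p ?k - x ?k) 0 = p ?k - x ?k" using pk by simp
  have m2: "max (x ?k - p ?k) 0 \<ge> 0" by simp
  show ?thesis unfolding Qc_def using a a2 b c m1 m2 Q1 Q2 Q3 by linarith
qed

lemma sum_delta_ground: "e \<in> ground n \<Longrightarrow> (\<Sum>j\<in>ground n. (if j = e then 1 else 0::real)) = 1"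
  using ground_simps(1) by simp

lemma phi_up:
  assumes mb: "matroid_bases (Suc n) \<B>" and ex: "\<exists>D\<in>\<B>. Suc n \<in> D" and D: "D \<in> \<B>"
  shows "\<exists>D'. D' \<in> \<B> \<and> Suc n \<in> D' \<and> (\<forall>j\<in>ground n. indic (D' - {Suc n}) j \<le> indic D j)
     \<and> (\<Sum>j\<in>ground n. indic D j - indic (D' - {Suc n}) j) = 1 - indic D (Suc n)"
proof (cases "Suc n \<in> D")
  case True
  have "\<forall>j\<in>ground n. indic (D - {Suc n}) j = indic D j" using ground_simps(3)[of n]
    by (auto simp: indic_def)
  then show ?thesis using True D by (intro exI[of _ D]) (auto simp: indic_def)
next
  case False
  obtain D0 where D0: "D0 \<in> \<B>" "Suc n \<in> D0" using ex by blast
  obtain e where e: "e \<in> D" "insert (Suc n) (D - {e}) \<in> \<B>" using L1[OF mb D0 D False] by blast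
  have en: "e \<in> ground n"
  proof -
    have "e \<in> ground (Suc n)" using e mb_sub[OF mb D] by blast
    moreover have "e \<noteq> Suc n" using e False by blast
    ultimately show ?thesis by (auto simp: ground_def)
  qed
  have eq: "\<forall>j\<in>ground n. indic D j - indic (insert (Suc n) (D - {e}) - {Suc n}) j = (if j = e then 1 else 0)"
    using e False ground_simps(3)[of n] by (auto simp: indic_def)
  have "(\<Sum>j\<in>ground n. indic D j - indic (insert (Suc n) (D - {e}) - {Suc n}) j)
       = (\<Sum>j\<in>ground n. (if j = e then 1 else 0))"
    by (rule sum.cong[OF refl]) (use eq in blast)
  then have "(\<Sum>j\<in>ground n. indic D j - indic (insert (Suc n) (D - {e}) - {Suc n}) j) = 1"
    using sum_delta_ground[OF en] by simp
  moreover have "\<forall>j\<in>ground n. indic (insert (Suc n) (D - {e}) - {Suc n}) j \<le> indic D j"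
    using eq by (auto simp: indic_def split: if_splits)
  ultimately show ?thesis using e False
    by (intro exI[of _ "insert (Suc n) (D - {e})"]) (auto simp: indic_def)
qed

lemma phi_down:
  assumes mb: "matroid_bases (Suc n) \<B>" and ex: "\<exists>D\<in>\<B>. Suc n \<notin> D" and D: "D \<in> \<B>"
  shows "\<exists>D'. D' \<in> \<B> \<and> Suc n \<notin> D' \<and> (\<forall>j\<in>ground n. indic D j \<le> indic D' j)
     \<and> (\<Sum>j\<in>ground n. indic D' j - indic D j) = indic D (Suc n)"
proof (cases "Suc n \<in> D")
  case False
  then show ?thesis using D by (intro exI[of _ D]) (auto simp: indic_def)
next
  case True
  obtain D0 where D0: "D0 \<in> \<B>" "Suc n \<notin> D0" using ex by blast
  have "Suc n \<in> D - D0" using True D0 by blast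
  then obtain y where y: "y \<in> D0 - D" "insert y (D - {Suc n}) \<in> \<B>" using mb_exch[OF mb D D0(1)] by blast
  have yn: "y \<in> ground n"
  proof -
    have "y \<in> ground (Suc n)" using y mb_sub[OF mb D0(1)] by blast
    moreover have "y \<noteq> Suc n" using y True by blast
    ultimately show ?thesis by (auto simp: ground_def)
  qed
  have eq: "\<forall>j\<in>ground n. indic (insert y (D - {Suc n})) j - indic D j = (if j = y then 1 else 0)"
    using y ground_simps(3)[of n] by (auto simp: indic_def)
  have "(\<Sum>j\<in>ground n. indic (insert y (D - {Suc n})) j - indic D j)
      = (\<Sum>j\<in>ground n. (if j = y then 1 else 0))"
    by (rule sum.cong[OF refl]) (use eq in blast)
  then have "(\<Sum>j\<in>ground n. indic (insert y (D - {Suc n})) j - indic D j) = 1"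
    using sum_delta_ground[OF yn] by simp
  moreover have "\<forall>j\<in>ground n. indic D j \<le> indic (insert y (D - {Suc n})) j"
    using eq by (auto simp: indic_def split: if_splits)
  moreover have "Suc n \<notin> insert y (D - {Suc n})" using y True by blast
  ultimately show ?thesis using y True
    by (intro exI[of _ "insert y (D - {Suc n})"]) (auto simp: indic_def)
qed

lemma uniq_A1:
  fixes w :: "nat \<Rightarrow> real"
  assumes mb: "matroid_bases (Suc n) \<B>" and ex: "\<exists>D\<in>\<B>. Suc n \<in> D"
    and wk: "\<forall>j\<in>ground n. w j < w (Suc n)"
    and B': "B' \<in> (\<lambda>D. D - {Suc n}) ` {D\<in>\<B>. Suc n \<in> D}"
    and un: "\<forall>D\<in>(\<lambda>D. D - {Suc n}) ` {D\<in>\<B>. Suc n \<in> D}. D \<noteq> B' \<longrightarrow> sum w D < sum w B'"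
  shows "insert (Suc n) B' \<in> \<B> \<and> (\<forall>D\<in>\<B>. D \<noteq> insert (Suc n) B' \<longrightarrow> sum w D < sum w (insert (Suc n) B'))"
proof -
  let ?k = "Suc n"
  obtain D0 where D0: "D0 \<in> \<B>" "?k \<in> D0" "B' = D0 - {?k}" using B' by blast
  have BD0: "insert ?k B' = D0" using D0 by blast
  have finB': "finite B'" using mb_fin[OF mb D0(1)] D0 by simp
  have kB': "?k \<notin> B'" using D0 by blast
  have sB: "sum w (insert ?k B') = w ?k + sum w B'" using finB' kB' by simp
  have c1: "sum w D < sum w (insert ?k B')" if D: "D \<in> \<B>" "?k \<in> D" "D \<noteq> insert ?k B'" for D
  proof -
    have "D - {?k} \<in> (\<lambda>D. D - {Suc n}) ` {D\<in>\<B>. Suc n \<in> D}" using D by blast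
    moreover have "D - {?k} \<noteq> B'" using D by blast
    ultimately have "sum w (D - {?k}) < sum w B'" using un by blast
    moreover have "sum w D = w ?k + sum w (D - {?k})"
      using D mb_fin[OF mb D(1)] by (simp add: sum.remove)
    ultimately show ?thesis using sB by simp
  qed
  have "sum w D < sum w (insert ?k B')" if D: "D \<in> \<B>" "D \<noteq> insert ?k B'" for D
  proof (cases "?k \<in> D")
    case True then show ?thesis using c1 D by blast
  next
    case False
    obtain e where e: "e \<in> D" "insert ?k (D - {e}) \<in> \<B>" using L1[OF mb D0(1) D0(2) D(1) False] by blast
    have en: "e \<in> ground n"
    proof -
      have "e \<in> ground (Suc n)" using e mb_sub[OF mb D(1)] by blast
      moreover have "e \<noteq> Suc n" using e False by blast
      ultimately show ?thesis by (auto simp: ground_def)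
    qed
    have fD: "finite D" using mb_fin[OF mb D(1)] .
    have s2: "sum w (insert ?k (D - {e})) = w ?k + sum w D - w e"
      using fD e False by (simp add: sum_diff1)
    have "sum w (insert ?k (D - {e})) \<le> sum w (insert ?k B')"
      using c1[OF e(2)] by (cases "insert ?k (D - {e}) = insert ?k B'") (auto intro: less_imp_le)
    then show ?thesis using s2 wk en by (smt (verit))
  qed
  then show ?thesis using BD0 D0 by simp
qed

lemma uniq_B1:
  fixes w :: "nat \<Rightarrow> real"
  assumes mb: "matroid_bases (Suc n) \<B>" and ex: "\<exists>D\<in>\<B>. Suc n \<notin> D"
    and wk: "\<forall>j\<in>ground n. w (Suc n) < w j"
    and B': "B' \<in> {D\<in>\<B>. Suc n \<notin> D}"
    and un: "\<forall>D\<in>{D\<in>\<B>. Suc n \<notin> D}. D \<noteq> B' \<longrightarrow> sum w D < sum w B'"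
  shows "B' \<in> \<B> \<and> (\<forall>D\<in>\<B>. D \<noteq> B' \<longrightarrow> sum w D < sum w B')"
proof -
  let ?k = "Suc n"
  obtain D0 where D0: "D0 \<in> \<B>" "?k \<notin> D0" using ex by blast
  have "sum w D < sum w B'" if D: "D \<in> \<B>" "D \<noteq> B'" for D
  proof (cases "?k \<in> D")
    case False then show ?thesis using un D by blast
  next
    case True
    have "?k \<in> D - D0" using True D0 by blast
    then obtain y where y: "y \<in> D0 - D" "insert y (D - {?k}) \<in> \<B>" using mb_exch[OF mb D(1) D0(1)] by blast
    have yn: "y \<in> ground n"
    proof -
      have "y \<in> ground (Suc n)" using y mb_sub[OF mb D0(1)] by blast
      moreover have "y \<noteq> Suc n" using y True by blast
      ultimately show ?thesis by (auto simp: ground_def)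
    qed
    have fD: "finite D" using mb_fin[OF mb D(1)] .
    have s2: "sum w (insert y (D - {?k})) = w y + sum w D - w ?k"
      using fD y True by (simp add: sum_diff1)
    have kn: "?k \<notin> insert y (D - {?k})" using y True by blast
    have "sum w (insert y (D - {?k})) \<le> sum w B'"
      using un y(2) kn by (cases "insert y (D - {?k}) = B'") (auto intro: less_imp_le)
    then show ?thesis using s2 wk yn by (smt (verit))
  qed
  then show ?thesis using B' by simp
qed

lemma uniq_B2:
  fixes w :: "nat \<Rightarrow> real"
  assumes mb: "matroid_bases (Suc n) \<B>" and all: "\<forall>D\<in>\<B>. Suc n \<in> D"
    and B': "B' \<in> (\<lambda>D. D - {Suc n}) ` {D\<in>\<B>. Suc n \<in> D}"
    and un: "\<forall>D\<in>(\<lambda>D. D - {Suc n}) ` {D\<in>\<B>. Suc n \<in> D}. D \<noteq> B' \<longrightarrow> sum w D < sum w B'"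
  shows "insert (Suc n) B' \<in> \<B> \<and> (\<forall>D\<in>\<B>. D \<noteq> insert (Suc n) B' \<longrightarrow> sum w D < sum w (insert (Suc n) B'))"
proof -
  let ?k = "Suc n"
  obtain D0 where D0: "D0 \<in> \<B>" "?k \<in> D0" "B' = D0 - {?k}" using B' by blast
  have BD0: "insert ?k B' = D0" using D0 by blast
  have finB': "finite B'" using mb_fin[OF mb D0(1)] D0 by simp
  have kB': "?k \<notin> B'" using D0 by blast
  have sB: "sum w (insert ?k B') = w ?k + sum w B'" using finB' kB' by simp
  have "sum w D < sum w (insert ?k B')" if D: "D \<in> \<B>" "D \<noteq> insert ?k B'" for D
  proof -
    have kD: "?k \<in> D" using all D by blast
    have "D - {?k} \<in> (\<lambda>D. D - {Suc n}) ` {D\<in>\<B>. Suc n \<in> D}" using D kD by blast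
    moreover have "D - {?k} \<noteq> B'" using D kD by blast
    ultimately have "sum w (D - {?k}) < sum w B'" using un by blast
    moreover have "sum w D = w ?k + sum w (D - {?k})"
      using kD mb_fin[OF mb D(1)] by (simp add: sum.remove)
    ultimately show ?thesis using sB by simp
  qed
  then show ?thesis using BD0 D0 by simp
qed

definition Wt :: "(nat\<Rightarrow>real) \<Rightarrow> (nat\<Rightarrow>real) \<Rightarrow> real \<Rightarrow> real \<Rightarrow> nat set \<Rightarrow> nat \<Rightarrow> real" where
 "Wt \<alpha> \<beta> u t S i = (if i \<in> S then \<alpha> i / u else \<alpha> 1 / u + \<beta> 1 / t - \<beta> i / t)"

definition sg :: "nat \<Rightarrow> vec \<Rightarrow> real \<Rightarrow> real \<Rightarrow> nat set \<Rightarrow> nat set \<Rightarrow> bool" where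
 "sg n x U V S B \<longleftrightarrow> S \<subseteq> {2..n} \<and> (\<forall>i\<in>S. indic B i \<le> x i) \<and> (\<forall>i\<in>{2..n}-S. x i \<le> indic B i)
   \<and> (\<Sum>i\<in>S. x i - indic B i) \<le> U \<and> (\<Sum>i\<in>{2..n}-S. indic B i - x i) \<le> V
   \<and> (\<Sum>i\<in>ground n. x i - indic B i) = U - V"

lemma sub2_ground: "{2..n} \<subseteq> ground n" by (auto simp: ground_def)

lemma sum_agree1: "A \<subseteq> ground n \<Longrightarrow> \<forall>j\<in>ground n. indic B j = indic B' j \<Longrightarrow>
   (\<Sum>i\<in>A. x i - indic B i) = (\<Sum>i\<in>A. x i - indic B' i)"
  by (rule sum.cong) auto

lemma sum_agree2: "A \<subseteq> ground n \<Longrightarrow> \<forall>j\<in>ground n. indic B j = indic B' j \<Longrightarrow>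
   (\<Sum>i\<in>A. indic B i - x i) = (\<Sum>i\<in>A. indic B' i - x i)"
  by (rule sum.cong) auto

lemma asm_plus:
  assumes sg: "sg n x U' V S' B'" and ag: "\<forall>j\<in>ground n. indic B j = indic B' j"
    and e: "indic B (Suc n) \<le> x (Suc n)" and U': "U' = U - (x (Suc n) - indic B (Suc n))"
  shows "sg (Suc n) x U V (if Suc n = 1 then S' else insert (Suc n) S') B"
proof (cases "n = 0")
  case True
  have S': "S' = {}" using sg True unfolding sg_def by auto
  have e2: "{2..Suc 0} = ({}::nat set)" by auto
  have g1: "ground (Suc 0) = {1}" by (auto simp: ground_def)
  from sg True S' have "0 \<le> U'" "0 \<le> V" "0 = U' - V" unfolding sg_def by (auto simp: ground_def)
  then show ?thesis using True S' e2 g1 U' e unfolding sg_def by simp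
next
  case False
  let ?k = "Suc n"
  have S'sub: "S' \<subseteq> {2..n}" using sg unfolding sg_def by blast
  have kS': "?k \<notin> S'" using S'sub by auto
  have fS': "finite S'" using S'sub finite_subset by blast
  have S'g: "S' \<subseteq> ground n" using S'sub sub2_ground by blast
  have diff: "{2..?k} - insert ?k S' = {2..n} - S'" by auto
  have dg: "{2..n} - S' \<subseteq> ground n" using sub2_ground by blast
  have s1: "(\<Sum>i\<in>insert ?k S'. x i - indic B i) = (x ?k - indic B ?k) + (\<Sum>i\<in>S'. x i - indic B' i)"
    using fS' kS' sum_agree1[OF S'g ag] by simp
  have s2: "(\<Sum>i\<in>ground ?k. x i - indic B i) = (x ?k - indic B ?k) + (\<Sum>i\<in>ground n. x i - indic B' i)"
    using ground_simps(1-3)[of n] sum_agree1[OF subset_refl ag] by simp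
  have s3: "(\<Sum>i\<in>{2..n} - S'. indic B i - x i) = (\<Sum>i\<in>{2..n} - S'. indic B' i - x i)"
    using sum_agree2[OF dg ag] .
  have "\<forall>i\<in>insert ?k S'. indic B i \<le> x i"
  proof
    fix i assume i: "i \<in> insert ?k S'"
    show "indic B i \<le> x i"
    proof (cases "i = ?k")
      case True then show ?thesis using e by simp
    next
      case False then have "i \<in> S'" using i by blast
      then show ?thesis using sg ag S'g unfolding sg_def by auto
    qed
  qed
  moreover have "\<forall>i\<in>{2..n}-S'. x i \<le> indic B i" using sg ag dg unfolding sg_def by auto
  moreover have "insert ?k S' \<subseteq> {2..?k}" using S'sub False by auto
  ultimately show ?thesis using False diff s1 s2 s3 sg U' unfolding sg_def by auto
qed

lemma asm_minus:
  assumes sg: "sg n x U V' S' B'" and ag: "\<forall>j\<in>ground n. indic B j = indic B' j"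
    and e: "x (Suc n) \<le> indic B (Suc n)" and V': "V' = V - (indic B (Suc n) - x (Suc n))"
  shows "sg (Suc n) x U V S' B"
proof (cases "n = 0")
  case True
  have S': "S' = {}" using sg True unfolding sg_def by auto
  have e2: "{2..Suc 0} = ({}::nat set)" by auto
  have g1: "ground (Suc 0) = {1}" by (auto simp: ground_def)
  from sg True S' have "0 \<le> U" "0 \<le> V'" "0 = U - V'" unfolding sg_def by (auto simp: ground_def)
  then show ?thesis using True S' e2 g1 V' e unfolding sg_def by simp
next
  case False
  let ?k = "Suc n"
  have S'sub: "S' \<subseteq> {2..n}" using sg unfolding sg_def by blast
  have kS': "?k \<notin> S'" using S'sub by auto
  have S'g: "S' \<subseteq> ground n" using S'sub sub2_ground by blast
  have diff: "{2..?k} - S' = insert ?k ({2..n} - S')" using False S'sub by auto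
  have dg: "{2..n} - S' \<subseteq> ground n" using sub2_ground by blast
  have fd: "finite ({2..n} - S')" by simp
  have s1: "(\<Sum>i\<in>S'. x i - indic B i) = (\<Sum>i\<in>S'. x i - indic B' i)"
    using sum_agree1[OF S'g ag] .
  have s2: "(\<Sum>i\<in>ground ?k. x i - indic B i) = (x ?k - indic B ?k) + (\<Sum>i\<in>ground n. x i - indic B' i)"
    using ground_simps(1-3)[of n] sum_agree1[OF subset_refl ag] by simp
  have s3: "(\<Sum>i\<in>insert ?k ({2..n} - S'). indic B i - x i) = (indic B ?k - x ?k) + (\<Sum>i\<in>{2..n} - S'. indic B' i - x i)"
    using fd sum_agree2[OF dg ag] by simp
  have "\<forall>i\<in>insert ?k ({2..n} - S'). x i \<le> indic B i"
  proof
    fix i assume i: "i \<in> insert ?k ({2..n} - S')"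
    show "x i \<le> indic B i"
    proof (cases "i = ?k")
      case True then show ?thesis using e by simp
    next
      case False then have "i \<in> {2..n} - S'" using i by blast
      then show ?thesis using sg ag dg unfolding sg_def by auto
    qed
  qed
  moreover have "\<forall>i\<in>S'. indic B i \<le> x i" using sg ag S'g unfolding sg_def by auto
  moreover have "S' \<subseteq> {2..?k}" using S'sub by auto
  ultimately show ?thesis using diff s1 s2 s3 sg V' unfolding sg_def by auto
qed

lemma pt_diff_sum:
  assumes "finite I" "finite A"
  shows "(\<Sum>j\<in>A. pt I c f j - pt I c g j) = (\<Sum>v\<in>I. c v * (\<Sum>j\<in>A. indic (f v) j - indic (g v) j))"
proof -
  have "(\<Sum>j\<in>A. pt I c f j - pt I c g j) = (\<Sum>j\<in>A. \<Sum>v\<in>I. c v * (indic (f v) j - indic (g v) j))"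
    unfolding pt_def by (simp add: sum_subtractf right_diff_distrib)
  also have "\<dots> = (\<Sum>v\<in>I. \<Sum>j\<in>A. c v * (indic (f v) j - indic (g v) j))" by (rule sum.swap)
  also have "\<dots> = (\<Sum>v\<in>I. c v * (\<Sum>j\<in>A. indic (f v) j - indic (g v) j))" by (simp add: sum_distrib_left)
  finally show ?thesis .
qed

lemma pt_k1: "rep \<B> I c f \<Longrightarrow> (\<Sum>v\<in>I. c v * (1 - indic (f v) k)) = 1 - pt I c f k"
  unfolding rep_def pt_def by (simp add: right_diff_distrib sum_subtractf)

context
  fixes \<alpha> \<beta> :: "nat \<Rightarrow> real" and u t :: real and N :: nat
  assumes u: "u > 0" and t: "t > 0"
    and am: "\<And>i j. 1 \<le> i \<Longrightarrow> i < j \<Longrightarrow> j \<le> N \<Longrightarrow> \<alpha> i < \<alpha> j"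
    and bm: "\<And>i j. 1 \<le> i \<Longrightarrow> i < j \<Longrightarrow> j \<le> N \<Longrightarrow> \<beta> i < \<beta> j"
begin

lemma am_le: "1 \<le> i \<Longrightarrow> i \<le> j \<Longrightarrow> j \<le> N \<Longrightarrow> \<alpha> i \<le> \<alpha> j"
  using am by (cases "i = j") (auto intro: less_imp_le)

lemma bm_le: "1 \<le> i \<Longrightarrow> i \<le> j \<Longrightarrow> j \<le> N \<Longrightarrow> \<beta> i \<le> \<beta> j"
  using bm by (cases "i = j") (auto intro: less_imp_le)

lemma W_gt:
  assumes k: "Suc n \<in> S" "Suc n \<le> N" and j: "j \<in> ground n"
  shows "Wt \<alpha> \<beta> u t S j < Wt \<alpha> \<beta> u t S (Suc n)"
proof -
  have j1: "1 \<le> j" "j < Suc n" using j by (auto simp: ground_def)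
  have a1: "\<alpha> j / u < \<alpha> (Suc n) / u" using am[OF j1(1) j1(2) k(2)] u by (simp add: divide_strict_right_mono)
  have a2: "\<alpha> 1 / u < \<alpha> (Suc n) / u" using am[of 1 "Suc n"] j1 k(2) u by (simp add: divide_strict_right_mono)
  have b1: "\<beta> 1 / t \<le> \<beta> j / t" using bm_le[of 1 j] j1 k(2) t by (simp add: divide_right_mono)
  show ?thesis unfolding Wt_def using k a1 a2 b1 by auto
qed

lemma W_lt:
  assumes k: "Suc n \<notin> S" "Suc n \<le> N" and j: "j \<in> ground n"
  shows "Wt \<alpha> \<beta> u t S (Suc n) < Wt \<alpha> \<beta> u t S j"
proof -
  have j1: "1 \<le> j" "j < Suc n" using j by (auto simp: ground_def)
  have a1: "\<alpha> 1 / u \<le> \<alpha> j / u" using am_le[of 1 j] j1 k(2) u by (simp add: divide_right_mono)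
  have b1: "\<beta> 1 / t < \<beta> (Suc n) / t" using bm[of 1 "Suc n"] j1 k(2) t by (simp add: divide_strict_right_mono)
  have b2: "\<beta> j / t < \<beta> (Suc n) / t" using bm[OF j1(1) j1(2) k(2)] t by (simp add: divide_strict_right_mono)
  show ?thesis unfolding Wt_def using k a1 b1 b2 by auto
qed

lemma W_transfer:
  assumes "\<forall>i\<in>ground n. (i \<in> S \<longleftrightarrow> i \<in> S')" "D \<subseteq> ground n"
  shows "sum (Wt \<alpha> \<beta> u t S) D = sum (Wt \<alpha> \<beta> u t S') D"
  using assms by (intro sum.cong) (auto simp: Wt_def)

end

lemma transfer_uniq:
  assumes ag: "\<forall>i\<in>ground n. (i \<in> S \<longleftrightarrow> i \<in> S')" and mb: "matroid_bases n \<B>" and B': "B' \<in> \<B>"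
    and un: "\<forall>D\<in>\<B>. D \<noteq> B' \<longrightarrow> sum (Wt \<alpha> \<beta> u t S') D < sum (Wt \<alpha> \<beta> u t S') B'"
  shows "\<forall>D\<in>\<B>. D \<noteq> B' \<longrightarrow> sum (Wt \<alpha> \<beta> u t S) D < sum (Wt \<alpha> \<beta> u t S) B'"
proof (intro ballI impI)
  have eq: "sum (Wt \<alpha> \<beta> u t S) D = sum (Wt \<alpha> \<beta> u t S') D" if "D \<in> \<B>" for D
  proof (rule sum.cong[OF refl])
    fix i assume "i \<in> D"
    then have "i \<in> ground n" using mb_sub[OF mb that] by blast
    then show "Wt \<alpha> \<beta> u t S i = Wt \<alpha> \<beta> u t S' i" using ag by (simp add: Wt_def)
  qed
  fix D assume "D \<in> \<B>" "D \<noteq> B'"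
  then show "sum (Wt \<alpha> \<beta> u t S) D < sum (Wt \<alpha> \<beta> u t S) B'" using un eq[of D] eq[OF B'] by simp
qed

context
  fixes \<alpha> \<beta> :: "nat \<Rightarrow> real" and u t :: real and N :: nat
  assumes u: "u > 0" and t: "t > 0"
    and am: "\<And>i j. 1 \<le> i \<Longrightarrow> i < j \<Longrightarrow> j \<le> N \<Longrightarrow> \<alpha> i < \<alpha> j"
    and bm: "\<And>i j. 1 \<le> i \<Longrightarrow> i < j \<Longrightarrow> j \<le> N \<Longrightarrow> \<beta> i < \<beta> j"
begin

lemma CL:
  "n \<le> N \<Longrightarrow> matroid_bases n \<B> \<Longrightarrow> (\<forall>i\<in>ground n. x i \<in> \<int>) \<Longrightarrow> Qh n \<B> x U V \<Longrightarrow>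
    \<exists>S B. sg n x U V S B \<and> B \<in> \<B> \<and> (\<forall>D\<in>\<B>. D \<noteq> B \<longrightarrow> sum (Wt \<alpha> \<beta> u t S) D < sum (Wt \<alpha> \<beta> u t S) B)"
proof (induction n arbitrary: \<B> x U V)
  case 0
  have B0: "\<B> = {{}}" using 0(2) unfolding matroid_bases_def ground_def by auto
  obtain I c f where "Qc 0 x U V (pt I c f)" using 0(4) unfolding Qh_def by blast
  then have "0 \<le> U" "0 \<le> V" "0 = U - V" unfolding Qc_def by (auto simp: ground_def)
  then have "sg 0 x U V {} {}" unfolding sg_def by (auto simp: ground_def)
  then show ?case using B0 by (intro exI[of _ "{}"]) auto
next
  case (Suc n)
  let ?k = "Suc n"
  note mb = Suc.prems(2)
  have nN: "n \<le> N" using Suc.prems(1) by simp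
  have xint: "\<forall>i\<in>ground n. x i \<in> \<int>" using Suc.prems(3) ground_simps(2)[of n] by blast
  obtain I c f where rp: "rep \<B> I c f" and Q: "Qc ?k x U V (pt I c f)" using Suc.prems(4) unfolding Qh_def by blast
  have finI: "finite I" and c0: "\<forall>v\<in>I. 0 \<le> c v" and c1: "sum c I = 1" and fB: "\<forall>v\<in>I. f v \<in> \<B>"
    using rp unfolding rep_def by auto
  have "x ?k \<in> \<int>" using Suc.prems(3) by (simp add: ground_def)
  then obtain z :: int where z: "x ?k = of_int z" by (auto elim: Ints_cases)
  have xk: "x ?k \<ge> 1 \<or> x ?k \<le> 0" using z by (cases "z \<ge> 1") auto
  have pk: "0 \<le> pt I c f ?k" "pt I c f ?k \<le> 1" using pt_bounds[OF rp] by auto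
  have kg: "?k \<notin> ground n" by (simp add: ground_simps)
  have finG: "finite (ground n)" by (simp add: ground_simps)
  have agr_plus: "\<forall>i\<in>ground n. (i \<in> (if ?k = 1 then S' else insert ?k S') \<longleftrightarrow> i \<in> S')" for S'
    using kg by auto
  show ?case
  proof (cases "x ?k \<ge> 1")
    case xk1: True
    show ?thesis
    proof (cases "\<exists>D\<in>\<B>. ?k \<in> D")
      case ex: True
      define \<B>' where "\<B>' = (\<lambda>D. D - {?k}) ` {D\<in>\<B>. ?k \<in> D}"
      define P where "P D D' \<longleftrightarrow> D' \<in> \<B> \<and> ?k \<in> D' \<and> (\<forall>j\<in>ground n. indic (D' - {?k}) j \<le> indic D j)
         \<and> (\<Sum>j\<in>ground n. indic D j - indic (D' - {?k}) j) = 1 - indic D ?k" for D D'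
      define f' where "f' v = (SOME D'. P (f v) D') - {?k}" for v
      have fP: "P (f v) (SOME D'. P (f v) D')" if "v \<in> I" for v
        using phi_up[OF mb ex fB[rule_format, OF that]] unfolding P_def by (rule someI_ex)
      have rp': "rep \<B>' I c f'" using rp fP unfolding rep_def \<B>'_def f'_def P_def by blast
      have le: "\<forall>j\<in>ground n. pt I c f' j \<le> pt I c f j"
        unfolding pt_def f'_def using fP c0 unfolding P_def by (auto intro!: sum_mono mult_left_mono)
      have "(\<Sum>j\<in>ground n. pt I c f j - pt I c f' j) = (\<Sum>v\<in>I. c v * (\<Sum>j\<in>ground n. indic (f v) j - indic (f' v) j))"
        by (rule pt_diff_sum[OF finI finG])
      also have "\<dots> = (\<Sum>v\<in>I. c v * (1 - indic (f v) ?k))"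
        using fP unfolding f'_def P_def by (intro sum.cong) auto
      also have "\<dots> = 1 - pt I c f ?k" by (rule pt_k1[OF rp])
      finally have s: "(\<Sum>j\<in>ground n. pt I c f j - pt I c f' j) = 1 - pt I c f ?k" .
      have Q': "Qc n x (U - (x ?k - 1)) V (pt I c f')"
        by (rule Qc_up[OF Q _ le s]) (use pk xk1 in linarith)
      have mb': "matroid_bases n \<B>'" unfolding \<B>'_def by (rule con_mb[OF mb ex])
      obtain S' B' where IH: "sg n x (U - (x ?k - 1)) V S' B'" "B' \<in> \<B>'"
        "\<forall>D\<in>\<B>'. D \<noteq> B' \<longrightarrow> sum (Wt \<alpha> \<beta> u t S') D < sum (Wt \<alpha> \<beta> u t S') B'"
        using Suc.IH[OF nN mb' xint] Q' rp' unfolding Qh_def by blast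
      define S where "S = (if ?k = 1 then S' else insert ?k S')"
      have un': "\<forall>D\<in>\<B>'. D \<noteq> B' \<longrightarrow> sum (Wt \<alpha> \<beta> u t S) D < sum (Wt \<alpha> \<beta> u t S) B'"
        unfolding S_def by (rule transfer_uniq[OF agr_plus mb' IH(2,3)])
      have wk: "\<forall>j\<in>ground n. Wt \<alpha> \<beta> u t S j < Wt \<alpha> \<beta> u t S ?k"
      proof
        fix j assume j: "j \<in> ground n"
        then have "n \<noteq> 0" by (auto simp: ground_def)
        then have "?k \<in> S" unfolding S_def by auto
        then show "Wt \<alpha> \<beta> u t S j < Wt \<alpha> \<beta> u t S ?k" using W_gt[where \<alpha>=\<alpha> and \<beta>=\<beta> and u=u and t=t and N=N, OF u t am bm _ Suc.prems(1) j] by blast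
      qed
      have UB: "insert ?k B' \<in> \<B> \<and> (\<forall>D\<in>\<B>. D \<noteq> insert ?k B' \<longrightarrow> sum (Wt \<alpha> \<beta> u t S) D < sum (Wt \<alpha> \<beta> u t S) (insert ?k B'))"
        using uniq_A1[OF mb ex wk, of B'] IH(2) un' unfolding \<B>'_def by blast
      have ag: "\<forall>j\<in>ground n. indic (insert ?k B') j = indic B' j" using kg by (auto simp: indic_def)
      have "sg ?k x U V S (insert ?k B')"
        unfolding S_def by (rule asm_plus[OF IH(1) ag]) (use xk1 in \<open>auto simp: indic_def\<close>)
      then show ?thesis using UB by blast
    next
      case nex: False
      have mb': "matroid_bases n \<B>" using none_mb[OF mb] nex by blast
      have p0: "pt I c f ?k = 0" unfolding pt_def using fB nex by (auto simp: indic_def intro!: sum.neutral)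
      have Q': "Qc n x (U - (x ?k - 0)) V (pt I c f)"
        by (rule Qc_up[OF Q]) (use p0 xk1 in auto)
      obtain S' B' where IH: "sg n x (U - (x ?k - 0)) V S' B'" "B' \<in> \<B>"
        "\<forall>D\<in>\<B>. D \<noteq> B' \<longrightarrow> sum (Wt \<alpha> \<beta> u t S') D < sum (Wt \<alpha> \<beta> u t S') B'"
        using Suc.IH[OF nN mb' xint] Q' rp unfolding Qh_def by blast
      define S where "S = (if ?k = 1 then S' else insert ?k S')"
      have un': "\<forall>D\<in>\<B>. D \<noteq> B' \<longrightarrow> sum (Wt \<alpha> \<beta> u t S) D < sum (Wt \<alpha> \<beta> u t S) B'"
        unfolding S_def by (rule transfer_uniq[OF agr_plus mb' IH(2,3)])
      have kB: "?k \<notin> B'" using IH(2) nex by blast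
      have "sg ?k x U V S B'"
        unfolding S_def by (rule asm_plus[OF IH(1)]) (use xk1 kB in \<open>auto simp: indic_def\<close>)
      then show ?thesis using IH(2) un' by blast
    qed
  next
    case xk0: False
    then have xk0: "x ?k \<le> 0" using xk by linarith
    show ?thesis
    proof (cases "\<exists>D\<in>\<B>. ?k \<notin> D")
      case ex: True
      define \<B>' where "\<B>' = {D\<in>\<B>. ?k \<notin> D}"
      define P where "P D D' \<longleftrightarrow> D' \<in> \<B> \<and> ?k \<notin> D' \<and> (\<forall>j\<in>ground n. indic D j \<le> indic D' j)
         \<and> (\<Sum>j\<in>ground n. indic D' j - indic D j) = indic D ?k" for D D'
      define f' where "f' v = (SOME D'. P (f v) D')" for v
      have fP: "P (f v) (SOME D'. P (f v) D')" if "v \<in> I" for v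
        using phi_down[OF mb ex fB[rule_format, OF that]] unfolding P_def by (rule someI_ex)
      have rp': "rep \<B>' I c f'" using rp fP unfolding rep_def \<B>'_def f'_def P_def by blast
      have le: "\<forall>j\<in>ground n. pt I c f j \<le> pt I c f' j"
        unfolding pt_def f'_def using fP c0 unfolding P_def by (auto intro!: sum_mono mult_left_mono)
      have "(\<Sum>j\<in>ground n. pt I c f' j - pt I c f j) = (\<Sum>v\<in>I. c v * (\<Sum>j\<in>ground n. indic (f' v) j - indic (f v) j))"
        by (rule pt_diff_sum[OF finI finG])
      also have "\<dots> = (\<Sum>v\<in>I. c v * indic (f v) ?k)"
        using fP unfolding f'_def P_def by (intro sum.cong) auto
      also have "\<dots> = pt I c f ?k - 0" unfolding pt_def by simp
      finally have s: "(\<Sum>j\<in>ground n. pt I c f' j - pt I c f j) = pt I c f ?k - 0" .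
      have Q': "Qc n x U (V - (0 - x ?k)) (pt I c f')"
        by (rule Qc_down[OF Q _ le s]) (use pk xk0 in linarith)
      have mb': "matroid_bases n \<B>'" unfolding \<B>'_def by (rule del_mb[OF mb ex])
      obtain S' B' where IH: "sg n x U (V - (0 - x ?k)) S' B'" "B' \<in> \<B>'"
        "\<forall>D\<in>\<B>'. D \<noteq> B' \<longrightarrow> sum (Wt \<alpha> \<beta> u t S') D < sum (Wt \<alpha> \<beta> u t S') B'"
        using Suc.IH[OF nN mb' xint] Q' rp' unfolding Qh_def by blast
      have kS': "?k \<notin> S'" using IH(1) unfolding sg_def by auto
      have wk: "\<forall>j\<in>ground n. Wt \<alpha> \<beta> u t S' ?k < Wt \<alpha> \<beta> u t S' j"
        using W_lt[where \<alpha>=\<alpha> and \<beta>=\<beta> and u=u and t=t and N=N, OF u t am bm kS' Suc.prems(1)] by blast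
      have UB: "B' \<in> \<B> \<and> (\<forall>D\<in>\<B>. D \<noteq> B' \<longrightarrow> sum (Wt \<alpha> \<beta> u t S') D < sum (Wt \<alpha> \<beta> u t S') B')"
        using uniq_B1[OF mb ex wk, of B'] IH(2,3) unfolding \<B>'_def by blast
      have kB: "?k \<notin> B'" using IH(2) unfolding \<B>'_def by blast
      have "sg ?k x U V S' B'"
        by (rule asm_minus[OF IH(1)]) (use xk0 kB in \<open>auto simp: indic_def\<close>)
      then show ?thesis using UB by blast
    next
      case nex: False
      then have all: "\<forall>D\<in>\<B>. ?k \<in> D" by blast
      have ex: "\<exists>D\<in>\<B>. ?k \<in> D" using all mb unfolding matroid_bases_def by blast
      define \<B>' where "\<B>' = (\<lambda>D. D - {?k}) ` {D\<in>\<B>. ?k \<in> D}"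
      define f' where "f' v = f v - {?k}" for v
      have rp': "rep \<B>' I c f'" using rp all unfolding rep_def \<B>'_def f'_def by blast
      have eqp: "\<forall>j\<in>ground n. pt I c f' j = pt I c f j"
        unfolding pt_def f'_def using kg by (auto simp: indic_def intro!: sum.cong)
      have p1: "pt I c f ?k = 1" unfolding pt_def using fB all c1 by (simp add: indic_def)
      have Q': "Qc n x U (V - (1 - x ?k)) (pt I c f')"
        by (rule Qc_down[OF Q]) (use eqp p1 xk0 in auto)
      have mb': "matroid_bases n \<B>'" unfolding \<B>'_def by (rule con_mb[OF mb ex])
      obtain S' B' where IH: "sg n x U (V - (1 - x ?k)) S' B'" "B' \<in> \<B>'"
        "\<forall>D\<in>\<B>'. D \<noteq> B' \<longrightarrow> sum (Wt \<alpha> \<beta> u t S') D < sum (Wt \<alpha> \<beta> u t S') B'"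
        using Suc.IH[OF nN mb' xint] Q' rp' unfolding Qh_def by blast
      have UB: "insert ?k B' \<in> \<B> \<and> (\<forall>D\<in>\<B>. D \<noteq> insert ?k B' \<longrightarrow> sum (Wt \<alpha> \<beta> u t S') D < sum (Wt \<alpha> \<beta> u t S') (insert ?k B'))"
        using uniq_B2[OF mb all, of B'] IH(2,3) unfolding \<B>'_def by blast
      have ag: "\<forall>j\<in>ground n. indic (insert ?k B') j = indic B' j" using kg by (auto simp: indic_def)
      have "sg ?k x U V S' (insert ?k B')"
        by (rule asm_minus[OF IH(1) ag]) (use xk0 in \<open>auto simp: indic_def\<close>)
      then show ?thesis using UB by blast
    qed
  qed
qed

end

definition dot :: "nat \<Rightarrow> vec \<Rightarrow> vec \<Rightarrow> real" where
  "dot n w p = (\<Sum>i\<in>ground n. w i * p i)"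

lemma lfun_dot: "lfun n w z = dot n w (fst z) - snd z"
  by (simp add: lfun_def dot_def)

lemma lfun_add: "lfun n w ((\<lambda>i. fst a i + fst b i), snd a + snd b) = lfun n w a + lfun n w b"
  by (simp add: lfun_def distrib_left sum.distrib)

lemma lfun_comb:
  "lfun n w ((\<lambda>j. \<Sum>i\<in>I. c i * fst (g i) j), \<Sum>i\<in>I. c i * snd (g i)) = (\<Sum>i\<in>I. c i * lfun n w (g i))"
proof -
  have "(\<Sum>j\<in>ground n. w j * (\<Sum>i\<in>I. c i * fst (g i) j)) = (\<Sum>j\<in>ground n. \<Sum>i\<in>I. c i * (w j * fst (g i) j))"
    by (simp add: sum_distrib_left algebra_simps)
  also have "\<dots> = (\<Sum>i\<in>I. \<Sum>j\<in>ground n. c i * (w j * fst (g i) j))" by (rule sum.swap)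
  also have "\<dots> = (\<Sum>i\<in>I. c i * (\<Sum>j\<in>ground n. w j * fst (g i) j))" by (simp add: sum_distrib_left)
  finally show ?thesis unfolding lfun_def by (simp add: sum_subtractf right_diff_distrib)
qed

lemma lconv_le:
  assumes y: "y \<in> lconv V" and b: "\<forall>v\<in>V. lfun n w v \<le> M"
  shows "lfun n w y \<le> M"
proof -
  obtain S c where S: "finite S" "S \<subseteq> V" "S \<noteq> {}" "\<forall>a\<in>S. c a \<ge> 0" "sum c S = 1"
    "y = ((\<lambda>i. \<Sum>a\<in>S. c a * fst a i), (\<Sum>a\<in>S. c a * snd a))"
    using y unfolding lconv_def by blast
  have "lfun n w y = (\<Sum>a\<in>S. c a * lfun n w (id a))" using S(6) lfun_comb[where I=S and c=c and g=id and n=n and w=w] by simp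
  also have "\<dots> \<le> (\<Sum>a\<in>S. c a * M)" using S b by (intro sum_mono mult_left_mono) auto
  also have "\<dots> = M" using S(5) by (simp add: sum_distrib_right[symmetric])
  finally show ?thesis .
qed

lemma lconv_sum:
  assumes y: "y \<in> lconv V" and b: "\<forall>v\<in>V. (\<Sum>j\<in>G. fst v j) = K"
  shows "(\<Sum>j\<in>G. fst y j) = K"
proof -
  obtain S c where S: "finite S" "S \<subseteq> V" "S \<noteq> {}" "\<forall>a\<in>S. c a \<ge> 0" "sum c S = 1"
    "y = ((\<lambda>i. \<Sum>a\<in>S. c a * fst a i), (\<Sum>a\<in>S. c a * snd a))"
    using y unfolding lconv_def by blast
  have "(\<Sum>j\<in>G. fst y j) = (\<Sum>j\<in>G. \<Sum>a\<in>S. c a * fst a j)" using S(6) by simp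
  also have "\<dots> = (\<Sum>a\<in>S. \<Sum>j\<in>G. c a * fst a j)" by (rule sum.swap)
  also have "\<dots> = (\<Sum>a\<in>S. c a * K)" using S(2) b by (intro sum.cong) (auto simp: sum_distrib_left[symmetric])
  also have "\<dots> = K" using S(5) by (simp add: sum_distrib_right[symmetric])
  finally show ?thesis .
qed

lemma conv_rep:
  assumes y: "y \<in> conv A"
  obtains S c where "finite S" "S \<subseteq> A" "S \<noteq> {}" "\<forall>a\<in>S. c a \<ge> 0" "sum c S = 1"
    "y = (\<lambda>i. \<Sum>a\<in>S. c a * a i)"
  using y unfolding conv_def by blast

lemma conv_sum:
  assumes y: "y \<in> conv V" and b: "\<forall>v\<in>V. (\<Sum>j\<in>G. v j) = K"
  shows "(\<Sum>j\<in>G. y j) = K"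
proof -
  obtain S c where S: "finite S" "S \<subseteq> V" "S \<noteq> {}" "\<forall>a\<in>S. c a \<ge> 0" "sum c S = 1"
    "y = (\<lambda>i. \<Sum>a\<in>S. c a * a i)" using conv_rep[OF y] by blast
  have "(\<Sum>j\<in>G. y j) = (\<Sum>j\<in>G. \<Sum>a\<in>S. c a * a j)" using S(6) by simp
  also have "\<dots> = (\<Sum>a\<in>S. \<Sum>j\<in>G. c a * a j)" by (rule sum.swap)
  also have "\<dots> = (\<Sum>a\<in>S. c a * K)" using S(2) b by (intro sum.cong) (auto simp: sum_distrib_left[symmetric])
  also have "\<dots> = K" using S(5) by (simp add: sum_distrib_right[symmetric])
  finally show ?thesis .
qed

lemma conv_pt:
  assumes y: "y \<in> conv V" and b: "\<forall>v\<in>V. v j = 0"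
  shows "y j = 0"
proof -
  obtain S c where S: "S \<subseteq> V" "y = (\<lambda>i. \<Sum>a\<in>S. c a * a i)" using conv_rep[OF y] by metis
  then show ?thesis using b by (auto intro!: sum.neutral)
qed

lemma conv_nonneg:
  assumes y: "y \<in> conv V" and b: "\<forall>v\<in>V. v j \<ge> 0"
  shows "y j \<ge> 0"
proof -
  obtain S c where S: "S \<subseteq> V" "\<forall>a\<in>S. c a \<ge> 0" "y = (\<lambda>i. \<Sum>a\<in>S. c a * a i)" using conv_rep[OF y] by metis
  then show ?thesis using b by (auto intro!: sum_nonneg)
qed

lemma dot_conv:
  assumes y: "y = (\<lambda>i. \<Sum>a\<in>S. c a * a i)"
  shows "dot n w y = (\<Sum>a\<in>S. c a * dot n w a)"
proof -
  have "dot n w y = (\<Sum>j\<in>ground n. \<Sum>a\<in>S. c a * (w j * a j))"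
    unfolding dot_def y by (simp add: sum_distrib_left algebra_simps)
  also have "\<dots> = (\<Sum>a\<in>S. \<Sum>j\<in>ground n. c a * (w j * a j))" by (rule sum.swap)
  also have "\<dots> = (\<Sum>a\<in>S. c a * dot n w a)" unfolding dot_def by (simp add: sum_distrib_left)
  finally show ?thesis .
qed

lemma dot_indic: "D \<subseteq> ground n \<Longrightarrow> dot n w (indic D) = sum w D"
proof -
  assume D: "D \<subseteq> ground n"
  have "dot n w (indic D) = (\<Sum>j\<in>ground n. if j \<in> D then w j else 0)"
    unfolding dot_def indic_def by (intro sum.cong) auto
  also have "\<dots> = sum w {j\<in>ground n. j \<in> D}" by (simp add: sum.inter_filter ground_simps)
  also have "{j\<in>ground n. j \<in> D} = D" using D by blast
  finally show ?thesis .
qed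

lemma sum_indic_card: "D \<subseteq> ground n \<Longrightarrow> (\<Sum>j\<in>ground n. indic D j) = real (card D)"
  using dot_indic[of D n "\<lambda>_. 1"] by (simp add: dot_def)

lemma dot_unitv: "i \<in> ground n \<Longrightarrow> (\<Sum>j\<in>ground n. w j * (r * unitv i j)) = w i * r"
proof -
  assume i: "i \<in> ground n"
  have "(\<Sum>j\<in>ground n. w j * (r * unitv i j)) = (\<Sum>j\<in>ground n. if j = i then w i * r else 0)"
    unfolding unitv_def by (intro sum.cong) auto
  also have "\<dots> = w i * r" using i ground_simps(1) by simp
  finally show ?thesis .
qed

lemma comb_unitv: "finite I \<Longrightarrow> (\<Sum>i\<in>I. c i * (r * unitv i j)) = (if j \<in> I then r * c j else 0)"
proof -
  assume I: "finite I"
  have "(\<Sum>i\<in>I. c i * (r * unitv i j)) = (\<Sum>i\<in>I. if j = i then r * c j else 0)"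
    unfolding unitv_def by (intro sum.cong) auto
  also have "\<dots> = (if j \<in> I then r * c j else 0)" using I by simp
  finally show ?thesis .
qed

lemma argmax_cong: "(\<forall>z\<in>L. f' z = f z + c) \<Longrightarrow> argmax_face f' L = argmax_face f L"
  unfolding argmax_face_def by auto

lemma same_h:
  assumes p: "p \<in> fst ` argmax_face (lfun n w) L" "p \<in> fst ` argmax_face (lfun n w') L"
    and q: "q \<in> fst ` argmax_face (lfun n w) L" "q \<in> fst ` argmax_face (lfun n w') L"
  shows "dot n (\<lambda>i. w' i - w i) p = dot n (\<lambda>i. w' i - w i) q"
proof -
  obtain hp where hp: "(p, hp) \<in> L" "\<forall>y\<in>L. lfun n w y \<le> lfun n w (p, hp)"
    using p(1) unfolding argmax_face_def by force
  obtain hp' where hp': "(p, hp') \<in> L" "\<forall>y\<in>L. lfun n w' y \<le> lfun n w' (p, hp')"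
    using p(2) unfolding argmax_face_def by force
  obtain hq where hq: "(q, hq) \<in> L" "\<forall>y\<in>L. lfun n w y \<le> lfun n w (q, hq)"
    using q(1) unfolding argmax_face_def by force
  obtain hq' where hq': "(q, hq') \<in> L" "\<forall>y\<in>L. lfun n w' y \<le> lfun n w' (q, hq')"
    using q(2) unfolding argmax_face_def by force
  have 1: "hp = hp'" using hp(2)[rule_format, OF hp'(1)] hp'(2)[rule_format, OF hp(1)] by (simp add: lfun_dot)
  have 2: "hq = hq'" using hq(2)[rule_format, OF hq'(1)] hq'(2)[rule_format, OF hq(1)] by (simp add: lfun_dot)
  have 3: "dot n w p - hp = dot n w q - hq"
    using hp(2)[rule_format, OF hq(1)] hq(2)[rule_format, OF hp(1)] by (simp add: lfun_dot)
  have 4: "dot n w' p - hp' = dot n w' q - hq'"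
    using hp'(2)[rule_format, OF hq'(1)] hq'(2)[rule_format, OF hp'(1)] by (simp add: lfun_dot)
  have d: "dot n (\<lambda>i. w' i - w i) z = dot n w' z - dot n w z" for z
    unfolding dot_def by (simp add: left_diff_distrib sum_subtractf)
  show ?thesis using 1 2 3 4 d[of p] d[of q] by linarith
qed

locale geo =
  fixes n t u :: nat and \<B> :: "nat set set" and \<alpha> \<beta> :: "nat \<Rightarrow> real" and S B :: "nat set"
  assumes mb: "matroid_bases n \<B>" and t0: "t > 0" and u0: "u > 0" and n1: "1 \<le> n"
    and am: "\<And>i j. 1 \<le> i \<Longrightarrow> i < j \<Longrightarrow> j \<le> n \<Longrightarrow> \<alpha> i < \<alpha> j"
    and bm: "\<And>i j. 1 \<le> i \<Longrightarrow> i < j \<Longrightarrow> j \<le> n \<Longrightarrow> \<beta> i < \<beta> j"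
    and S: "S \<subseteq> {2..n}" and B: "B \<in> \<B>"
    and un: "\<forall>D\<in>\<B>. D \<noteq> B \<longrightarrow> sum (Wt \<alpha> \<beta> (real u) (real t) S) D < sum (Wt \<alpha> \<beta> (real u) (real t) S) B"

context geo
begin

lemma a1le: "i \<in> ground n \<Longrightarrow> \<alpha> 1 \<le> \<alpha> i"
  using am[of 1 i] by (cases "i = 1") (auto simp: ground_def intro: less_imp_le)

lemma b1le: "i \<in> ground n \<Longrightarrow> \<beta> 1 \<le> \<beta> i"
  using bm[of 1 i] by (cases "i = 1") (auto simp: ground_def intro: less_imp_le)

lemma vD_val: "i \<in> ground n \<Longrightarrow> lfun n (Wt \<alpha> \<beta> (real u) (real t) S) (\<lambda>j. real u * unitv i j, \<alpha> i)
   = Wt \<alpha> \<beta> (real u) (real t) S i * real u - \<alpha> i"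
  by (simp add: lfun_def dot_unitv)

lemma vN_val: "i \<in> ground n \<Longrightarrow> lfun n (Wt \<alpha> \<beta> (real u) (real t) S) (\<lambda>j. - real t * unitv i j, \<beta> i)
   = Wt \<alpha> \<beta> (real u) (real t) S i * (- real t) - \<beta> i"
  unfolding lfun_def fst_conv snd_conv by (subst dot_unitv) auto

lemma vD_le: "i \<in> ground n \<Longrightarrow> Wt \<alpha> \<beta> (real u) (real t) S i * real u - \<alpha> i \<le> 0"
proof -
  assume i: "i \<in> ground n"
  have u': "real u > 0" "real t > 0" using u0 t0 by auto
  show ?thesis
  proof (cases "i \<in> S")
    case True then show ?thesis using u' by (simp add: Wt_def)
  next
    case False
    have "Wt \<alpha> \<beta> (real u) (real t) S i * real u = \<alpha> 1 + (\<beta> 1 - \<beta> i) * real u / real t"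
      using False u' by (simp add: Wt_def field_simps)
    moreover have "(\<beta> 1 - \<beta> i) * real u / real t \<le> 0"
      using b1le[OF i] u' by (simp add: divide_nonpos_pos mult_nonpos_nonneg)
    ultimately show ?thesis using a1le[OF i] by linarith
  qed
qed

lemma vD_eq: "i \<in> insert 1 S \<Longrightarrow> Wt \<alpha> \<beta> (real u) (real t) S i * real u - \<alpha> i = 0"
proof -
  assume i: "i \<in> insert 1 S"
  have u': "real u > 0" "real t > 0" using u0 t0 by auto
  have s1: "1 \<notin> S" using S by auto
  show ?thesis
  proof (cases "i \<in> S")
    case True then show ?thesis using u' by (simp add: Wt_def)
  next
    case False then have "i = 1" using i by blast
    then show ?thesis using s1 u' by (simp add: Wt_def field_simps)
  qed
qed

definition MN where "MN = - real t * \<alpha> 1 / real u - \<beta> 1"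

lemma vN_le: "i \<in> ground n \<Longrightarrow> Wt \<alpha> \<beta> (real u) (real t) S i * (- real t) - \<beta> i \<le> MN"
proof -
  assume i: "i \<in> ground n"
  have u': "real u > 0" "real t > 0" using u0 t0 by auto
  show ?thesis
  proof (cases "i \<in> S")
    case True
    have "Wt \<alpha> \<beta> (real u) (real t) S i * (- real t) = - real t * \<alpha> i / real u"
      using True by (simp add: Wt_def)
    moreover have "- real t * \<alpha> i / real u \<le> - real t * \<alpha> 1 / real u"
      using a1le[OF i] u' by (simp add: divide_right_mono mult_left_mono)
    ultimately show ?thesis using b1le[OF i] unfolding MN_def by linarith
  next
    case False
    then show ?thesis using u' unfolding MN_def by (simp add: Wt_def field_simps)
  qed
qed

lemma vN_eq: "i \<notin> S \<Longrightarrow> Wt \<alpha> \<beta> (real u) (real t) S i * (- real t) - \<beta> i = MN"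
  using t0 u0 unfolding MN_def by (simp add: Wt_def field_simps)

lemma indicB_in: "indic B \<in> matroid_polytope \<B>"
proof -
  have "(\<lambda>j. \<Sum>i\<in>{B}. (\<lambda>_. 1::real) i * indic i j) \<in> conv (indic ` \<B>)"
    using conv_gen[where I="{B}" and c="\<lambda>_. 1" and f=indic and A="indic ` \<B>"] B by simp
  moreover have "(\<lambda>j. \<Sum>i\<in>{B}. (\<lambda>_. 1::real) i * indic i j) = indic B" by simp
  ultimately show ?thesis unfolding matroid_polytope_def by simp
qed

lemma P_le:
  assumes p: "p \<in> matroid_polytope \<B>"
  shows "dot n (Wt \<alpha> \<beta> (real u) (real t) S) p \<le> sum (Wt \<alpha> \<beta> (real u) (real t) S) B"
proof -
  let ?w = "Wt \<alpha> \<beta> (real u) (real t) S"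
  obtain Sv c where Sv: "finite Sv" "Sv \<subseteq> indic ` \<B>" "\<forall>a\<in>Sv. c a \<ge> 0" "sum c Sv = 1"
    "p = (\<lambda>i. \<Sum>a\<in>Sv. c a * a i)"
  proof -
    from conv_rep[OF p[unfolded matroid_polytope_def]] obtain Sv c where "finite Sv" "Sv \<subseteq> indic ` \<B>" "Sv \<noteq> {}"
      "\<forall>a\<in>Sv. c a \<ge> 0" "sum c Sv = 1" "p = (\<lambda>i. \<Sum>a\<in>Sv. c a * a i)" .
    then show ?thesis using that by blast
  qed
  have "dot n ?w p = (\<Sum>a\<in>Sv. c a * dot n ?w a)" by (rule dot_conv[OF Sv(5)])
  also have "\<dots> \<le> (\<Sum>a\<in>Sv. c a * sum ?w B)"
  proof (intro sum_mono mult_left_mono)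
    fix a assume a: "a \<in> Sv"
    then obtain D where D: "D \<in> \<B>" "a = indic D" using Sv(2) by blast
    have "dot n ?w a = sum ?w D" using D dot_indic[OF mb_sub[OF mb D(1)]] by simp
    also have "\<dots> \<le> sum ?w B" using un D(1) by (cases "D = B") (auto intro: less_imp_le)
    finally show "dot n ?w a \<le> sum ?w B" .
    show "0 \<le> c a" using Sv a by blast
  qed
  also have "\<dots> = sum ?w B" using Sv(4) by (simp add: sum_distrib_right[symmetric])
  finally show ?thesis .
qed

lemma P_eq:
  assumes p: "p \<in> matroid_polytope \<B>" and ge: "sum (Wt \<alpha> \<beta> (real u) (real t) S) B \<le> dot n (Wt \<alpha> \<beta> (real u) (real t) S) p"
  shows "p = indic B"
proof -
  let ?w = "Wt \<alpha> \<beta> (real u) (real t) S"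
  let ?m = "sum ?w B"
  obtain Sv c where Sv: "finite Sv" "Sv \<subseteq> indic ` \<B>" "\<forall>a\<in>Sv. c a \<ge> 0" "sum c Sv = 1"
    "p = (\<lambda>i. \<Sum>a\<in>Sv. c a * a i)"
  proof -
    from conv_rep[OF p[unfolded matroid_polytope_def]] obtain Sv c where "finite Sv" "Sv \<subseteq> indic ` \<B>" "Sv \<noteq> {}"
      "\<forall>a\<in>Sv. c a \<ge> 0" "sum c Sv = 1" "p = (\<lambda>i. \<Sum>a\<in>Sv. c a * a i)" .
    then show ?thesis using that by blast
  qed
  have val: "dot n ?w a \<le> ?m \<and> (dot n ?w a = ?m \<longrightarrow> a = indic B)" if a: "a \<in> Sv" for a
  proof -
    obtain D where D: "D \<in> \<B>" "a = indic D" using Sv(2) a by blast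
    have "dot n ?w a = sum ?w D" using D dot_indic[OF mb_sub[OF mb D(1)]] by simp
    then show ?thesis using un D by (cases "D = B") auto
  qed
  have "(\<Sum>a\<in>Sv. c a * (?m - dot n ?w a)) = ?m - dot n ?w p"
    using dot_conv[OF Sv(5), of n ?w] Sv(4)
    by (simp add: right_diff_distrib sum_subtractf sum_distrib_right[symmetric])
  then have s0: "(\<Sum>a\<in>Sv. c a * (?m - dot n ?w a)) \<le> 0" using ge by simp
  have nn: "\<forall>a\<in>Sv. 0 \<le> c a * (?m - dot n ?w a)" using val Sv(3) by auto
  then have z: "\<forall>a\<in>Sv. c a * (?m - dot n ?w a) = 0"
    using s0 sum_nonneg_eq_0_iff[OF Sv(1)] by (metis (no_types, lifting) antisym sum_nonneg)
  have ca: "c a * a j = c a * indic B j" if a: "a \<in> Sv" for a j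
  proof (cases "c a = 0")
    case True then show ?thesis by simp
  next
    case False
    then have "dot n ?w a = ?m" using z a by auto
    then show ?thesis using val a by simp
  qed
  show ?thesis
  proof
    fix j
    have "p j = (\<Sum>a\<in>Sv. c a * indic B j)" using Sv(5) ca by simp
    also have "\<dots> = indic B j" using Sv(4) by (simp add: sum_distrib_right[symmetric])
    finally show "p j = indic B j" .
  qed
qed

lemma cellG_eq: "cellG n \<B> (Wt \<alpha> \<beta> (real u) (real t) S) = {indic B}"
proof -
  let ?w = "Wt \<alpha> \<beta> (real u) (real t) S"
  have mem: "(indic B, 0) \<in> argmax_face (lfun n ?w) (lift_P \<B>)"
    unfolding argmax_face_def lift_P_def using indicB_in P_le dot_indic[OF mb_sub[OF mb B]]
    by (auto simp: lfun_dot)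
  have "z = (indic B, 0)" if z: "z \<in> argmax_face (lfun n ?w) (lift_P \<B>)" for z
  proof -
    obtain p where p: "p \<in> matroid_polytope \<B>" "z = (p, 0)" using z unfolding argmax_face_def lift_P_def by blast
    have "lfun n ?w (indic B, 0) \<le> lfun n ?w z" using z indicB_in unfolding argmax_face_def lift_P_def by blast
    then have "sum ?w B \<le> dot n ?w p" using p dot_indic[OF mb_sub[OF mb B]] by (simp add: lfun_dot)
    then show ?thesis using P_eq p by simp
  qed
  then have "argmax_face (lfun n ?w) (lift_P \<B>) = {(indic B, 0)}" using mem by blast
  then show ?thesis unfolding cellG_def by simp
qed

end

lemma dot_pt3:
  assumes "i \<in> ground n" "k \<in> ground n"
  shows "dot n d (\<lambda>j. a * unitv i j + e j - b * unitv k j) = d i * a + dot n d e - d k * b"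
proof -
  have "dot n d (\<lambda>j. a * unitv i j + e j - b * unitv k j)
      = (\<Sum>j\<in>ground n. d j * (a * unitv i j) + d j * e j - d j * (b * unitv k j))"
    unfolding dot_def by (intro sum.cong) (auto simp: algebra_simps)
  also have "\<dots> = (\<Sum>j\<in>ground n. d j * (a * unitv i j)) + dot n d e - (\<Sum>j\<in>ground n. d j * (b * unitv k j))"
    unfolding dot_def by (simp add: sum_subtractf sum.distrib)
  also have "\<dots> = d i * a + dot n d e - d k * b" using assms by (simp add: dot_unitv)
  finally show ?thesis .
qed

lemma lmsum_I: "a \<in> A \<Longrightarrow> b \<in> B \<Longrightarrow> ((\<lambda>i. fst a i + fst b i), snd a + snd b) \<in> lmsum A B"
  unfolding lmsum_def by blast

context geo
begin

lemma one_g: "1 \<in> ground n" using n1 by (simp add: ground_def)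
lemma Sx_sub: "insert 1 S \<subseteq> ground n" using S one_g by (auto simp: ground_def)
lemma T_one: "1 \<in> ground n - S" using S one_g by auto

lemma cell_pt:
  assumes lam: "\<forall>j. 0 \<le> lam j" "\<forall>j. j \<notin> insert 1 S \<longrightarrow> lam j = 0" "sum lam (insert 1 S) = 1"
      and mu: "\<forall>j. 0 \<le> mu j" "\<forall>j. j \<notin> ground n - S \<longrightarrow> mu j = 0" "sum mu (ground n - S) = 1"
  shows "(\<lambda>j. real u * lam j + indic B j - real t * mu j) \<in> cell n \<B> t u \<alpha> \<beta> (Wt \<alpha> \<beta> (real u) (real t) S)"
proof -
  let ?w = "Wt \<alpha> \<beta> (real u) (real t) S"
  let ?Sx = "insert 1 S" and ?T = "ground n - S"
  let ?gD = "\<lambda>i. (\<lambda>j. real u * unitv i j, \<alpha> i)"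
  let ?gN = "\<lambda>i. (\<lambda>j. - real t * unitv i j, \<beta> i)"
  have finSx: "finite ?Sx" by (rule finite_subset[OF Sx_sub ground_simps(1)])
  have finT: "finite ?T" using ground_simps(1) by (rule finite_Diff)
  define lD where "lD = ((\<lambda>j. \<Sum>i\<in>?Sx. lam i * fst (?gD i) j), \<Sum>i\<in>?Sx. lam i * snd (?gD i))"
  define lN where "lN = ((\<lambda>j. \<Sum>i\<in>?T. mu i * fst (?gN i) j), \<Sum>i\<in>?T. mu i * snd (?gN i))"
  define lP where "lP = (indic B, 0::real)"
  have lD_in: "lD \<in> lift_Delta n u \<alpha>" unfolding lD_def lift_Delta_def
    by (rule lconv_gen) (use finSx lam Sx_sub in auto)
  have lN_in: "lN \<in> lift_Nabla n t \<beta>" unfolding lN_def lift_Nabla_def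
    by (rule lconv_gen) (use finT mu T_one in auto)
  have lP_in: "lP \<in> lift_P \<B>" unfolding lP_def lift_P_def using indicB_in by blast
  have fD: "fst lD = (\<lambda>j. real u * lam j)"
  proof
    fix j
    have "fst lD j = (\<Sum>i\<in>?Sx. lam i * (real u * unitv i j))" unfolding lD_def by simp
    also have "\<dots> = real u * lam j" using comb_unitv[OF finSx, of lam "real u" j] lam(2) by auto
    finally show "fst lD j = real u * lam j" .
  qed
  have fN: "fst lN = (\<lambda>j. - real t * mu j)"
  proof
    fix j
    have "fst lN j = (\<Sum>i\<in>?T. mu i * (- real t * unitv i j))" unfolding lN_def by simp
    also have "\<dots> = - real t * mu j" using comb_unitv[OF finT, of mu "- real t" j] mu(2) by auto
    finally show "fst lN j = - real t * mu j" .
  qed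
  have vD: "lfun n ?w (lD) = 0"
  proof -
    have "lfun n ?w lD = (\<Sum>i\<in>?Sx. lam i * lfun n ?w (?gD i))" unfolding lD_def by (rule lfun_comb)
    also have "\<dots> = (\<Sum>i\<in>?Sx. lam i * 0)"
      using Sx_sub vD_val vD_eq by (intro sum.cong) auto
    finally show ?thesis by simp
  qed
  have vN: "lfun n ?w lN = MN"
  proof -
    have "lfun n ?w lN = (\<Sum>i\<in>?T. mu i * lfun n ?w (?gN i))" unfolding lN_def by (rule lfun_comb)
    also have "\<dots> = (\<Sum>i\<in>?T. mu i * MN)"
      using vN_val vN_eq by (intro sum.cong) auto
    also have "\<dots> = MN" using mu(3) by (simp add: sum_distrib_right[symmetric])
    finally show ?thesis .
  qed
  have vP: "lfun n ?w lP = sum ?w B" unfolding lP_def using dot_indic[OF mb_sub[OF mb B]] by (simp add: lfun_dot)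
  define ab where "ab = ((\<lambda>i. fst lD i + fst lP i), snd lD + snd lP)"
  define l where "l = ((\<lambda>i. fst ab i + fst lN i), snd ab + snd lN)"
  have ab_in: "ab \<in> lmsum (lift_Delta n u \<alpha>) (lift_P \<B>)" unfolding ab_def by (rule lmsum_I[OF lD_in lP_in])
  have l_in: "l \<in> Lift n \<B> t u \<alpha> \<beta>" unfolding l_def Lift_def by (rule lmsum_I[OF ab_in lN_in])
  have vl: "lfun n ?w l = 0 + sum ?w B + MN" unfolding l_def ab_def by (simp only: lfun_add vD vN vP)
  have bound: "lfun n ?w z \<le> 0 + sum ?w B + MN" if z: "z \<in> Lift n \<B> t u \<alpha> \<beta>" for z
  proof -
    obtain a b c where abc: "a \<in> lift_Delta n u \<alpha>" "b \<in> lift_P \<B>" "c \<in> lift_Nabla n t \<beta>"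
      "z = ((\<lambda>i. fst ((\<lambda>i. fst a i + fst b i), snd a + snd b) i + fst c i), snd ((\<lambda>i. fst a i + fst b i), snd a + snd b) + snd c)"
      using z unfolding Lift_def lmsum_def by blast
    have "lfun n ?w z = lfun n ?w a + lfun n ?w b + lfun n ?w c" using abc(4) by (simp only: lfun_add)
    moreover have "lfun n ?w a \<le> 0"
      using lconv_le[OF abc(1)[unfolded lift_Delta_def]] vD_val vD_le by auto
    moreover have "lfun n ?w b \<le> sum ?w B"
    proof -
      obtain p where p: "p \<in> matroid_polytope \<B>" "b = (p, 0)" using abc(2) unfolding lift_P_def by blast
      then show ?thesis using P_le by (simp add: lfun_dot)
    qed
    moreover have "lfun n ?w c \<le> MN"
      using lconv_le[OF abc(3)[unfolded lift_Nabla_def]] vN_val vN_le by auto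
    ultimately show ?thesis by linarith
  qed
  have "l \<in> argmax_face (lfun n ?w) (Lift n \<B> t u \<alpha> \<beta>)"
    unfolding argmax_face_def using l_in bound vl by auto
  moreover have "fst l = (\<lambda>j. real u * lam j + indic B j - real t * mu j)"
    unfolding l_def ab_def lP_def using fD fN by auto
  ultimately show ?thesis unfolding cell_def by (metis image_eqI)
qed

end

context geo
begin

lemma finSx: "finite (insert 1 S)" by (rule finite_subset[OF Sx_sub ground_simps(1)])

lemma Lift_sum:
  assumes z: "z \<in> Lift n \<B> t u \<alpha> \<beta>"
  shows "(\<Sum>j\<in>ground n. fst z j) = real u + real (card B) - real t"
proof -
  obtain a b c where abc: "a \<in> lift_Delta n u \<alpha>" "b \<in> lift_P \<B>" "c \<in> lift_Nabla n t \<beta>"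
    "z = ((\<lambda>i. fst ((\<lambda>i. fst a i + fst b i), snd a + snd b) i + fst c i), snd ((\<lambda>i. fst a i + fst b i), snd a + snd b) + snd c)"
    using z unfolding Lift_def lmsum_def by blast
  have v1: "(\<Sum>j\<in>ground n. real u * unitv i j) = real u" if "i \<in> ground n" for i
    using dot_unitv[OF that, of "\<lambda>_. 1" "real u"] by simp
  have v2: "(\<Sum>j\<in>ground n. - real t * unitv i j) = - real t" if "i \<in> ground n" for i
    using dot_unitv[OF that, of "\<lambda>_. 1" "- real t"] by simp
  have sa: "(\<Sum>j\<in>ground n. fst a j) = real u"
    by (rule lconv_sum[OF abc(1)[unfolded lift_Delta_def]]) (use v1 in auto)
  have sc: "(\<Sum>j\<in>ground n. fst c j) = - real t"
    by (rule lconv_sum[OF abc(3)[unfolded lift_Nabla_def]]) (use v2 in auto)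
  obtain p where p: "p \<in> matroid_polytope \<B>" "b = (p, 0)" using abc(2) unfolding lift_P_def by blast
  have sb: "(\<Sum>j\<in>ground n. fst b j) = real (card B)"
  proof -
    have "(\<Sum>j\<in>ground n. p j) = real (card B)"
    proof (rule conv_sum[OF p(1)[unfolded matroid_polytope_def]], rule ballI)
      fix v assume "v \<in> indic ` \<B>"
      then obtain D where D: "D \<in> \<B>" "v = indic D" by blast
      show "(\<Sum>j\<in>ground n. v j) = real (card B)"
        using D sum_indic_card[OF mb_sub[OF mb D(1)]] equicard[OF mb D(1) B] by simp
    qed
    then show ?thesis using p by simp
  qed
  show ?thesis using abc(4) sa sb sc by (simp add: sum.distrib)
qed

lemma unitv_conds:
  assumes "i \<in> A" "finite A"
  shows "\<forall>j. 0 \<le> unitv i j" "\<forall>j. j \<notin> A \<longrightarrow> unitv i j = 0" "sum (unitv i) A = 1"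
  using assms by (auto simp: unitv_def)

lemma maximal:
  assumes sub: "cell n \<B> t u \<alpha> \<beta> (Wt \<alpha> \<beta> (real u) (real t) S) \<subseteq> cell n \<B> t u \<alpha> \<beta> w'"
  shows "cell n \<B> t u \<alpha> \<beta> w' = cell n \<B> t u \<alpha> \<beta> (Wt \<alpha> \<beta> (real u) (real t) S)"
proof -
  let ?w = "Wt \<alpha> \<beta> (real u) (real t) S"
  let ?d = "\<lambda>i. w' i - ?w i"
  let ?L = "Lift n \<B> t u \<alpha> \<beta>"
  define P where "P i k = (\<lambda>j. real u * unitv i j + indic B j - real t * unitv k j)" for i k
  have finT: "finite (ground n - S)" using ground_simps(1) by (rule finite_Diff)
  have Pin: "P i k \<in> cell n \<B> t u \<alpha> \<beta> ?w" if i: "i \<in> insert 1 S" and k: "k \<in> ground n - S" for i k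
    unfolding P_def by (rule cell_pt[OF unitv_conds[OF i finSx] unitv_conds[OF k finT]])
  have dP: "dot n ?d (P i k) = ?d i * real u + dot n ?d (indic B) - ?d k * real t"
    if "i \<in> ground n" "k \<in> ground n" for i k
    unfolding P_def by (rule dot_pt3[OF that])
  have sh: "dot n ?d (P i k) = dot n ?d (P 1 1)" if i: "i \<in> insert 1 S" and k: "k \<in> ground n - S" for i k
  proof (rule same_h)
    show "P i k \<in> fst ` argmax_face (lfun n ?w) ?L" using Pin[OF i k] unfolding cell_def .
    show "P i k \<in> fst ` argmax_face (lfun n w') ?L" using sub Pin[OF i k] unfolding cell_def by blast
    show "P 1 1 \<in> fst ` argmax_face (lfun n ?w) ?L" using Pin[OF _ T_one] unfolding cell_def by blast
    show "P 1 1 \<in> fst ` argmax_face (lfun n w') ?L" using sub Pin[OF _ T_one] unfolding cell_def by blast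
  qed
  have u': "real u \<noteq> 0" "real t \<noteq> 0" using u0 t0 by auto
  have const: "?d i = ?d 1" if i: "i \<in> ground n" for i
  proof (cases "i \<in> S")
    case True
    then have "i \<in> insert 1 S" by blast
    from sh[OF this T_one] dP[OF i one_g] dP[OF one_g one_g]
    have "?d i * real u = ?d 1 * real u" by simp
    then show ?thesis using u' by simp
  next
    case False
    then have k: "i \<in> ground n - S" using i by blast
    from sh[OF _ k] dP[OF one_g i] dP[OF one_g one_g]
    have "?d i * real t = ?d 1 * real t" by simp
    then show ?thesis using u' by simp
  qed
  have "\<forall>z\<in>?L. lfun n w' z = lfun n ?w z + ?d 1 * (real u + real (card B) - real t)"
  proof
    fix z assume z: "z \<in> ?L"
    have "lfun n w' z - lfun n ?w z = (\<Sum>j\<in>ground n. ?d j * fst z j)"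
      unfolding lfun_def by (simp add: sum_subtractf left_diff_distrib)
    also have "\<dots> = (\<Sum>j\<in>ground n. ?d 1 * fst z j)" using const by (intro sum.cong) auto
    also have "\<dots> = ?d 1 * (real u + real (card B) - real t)"
      using Lift_sum[OF z] by (simp add: sum_distrib_left[symmetric])
    finally show "lfun n w' z = lfun n ?w z + ?d 1 * (real u + real (card B) - real t)" by simp
  qed
  then show ?thesis unfolding cell_def by (simp only: argmax_cong)
qed

lemma x_in:
  assumes sg: "sg n x (real u) (real t) S B" and x0: "\<forall>j. j \<notin> ground n \<longrightarrow> x j = 0"
  shows "x \<in> cell n \<B> t u \<alpha> \<beta> (Wt \<alpha> \<beta> (real u) (real t) S)"
proof -
  let ?R = "{2..n} - S"
  define d where "d j = x j - indic B j" for j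
  have sgS: "\<forall>i\<in>S. 0 \<le> d i" and sgR: "\<forall>i\<in>?R. d i \<le> 0" and sU: "(\<Sum>i\<in>S. d i) \<le> real u"
    and sV: "- (\<Sum>i\<in>?R. d i) \<le> real t" and sT: "(\<Sum>i\<in>ground n. d i) = real u - real t"
    using sg unfolding sg_def d_def by (auto simp: sum_subtractf)
  have u': "real u > 0" "real t > 0" using u0 t0 by auto
  have finS: "finite S" using finite_subset[OF S] by simp
  have finR: "finite ?R" by simp
  have S1: "1 \<notin> S" using S by auto
  have R1: "1 \<notin> ?R" by auto
  have SR: "S \<inter> ?R = {}" by blast
  have gsplit: "ground n = insert 1 (S \<union> ?R)" using S n1 by (auto simp: ground_def)
  have Tsplit: "ground n - S = insert 1 ?R" using S n1 by (auto simp: ground_def)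
  define lam where "lam j = (if j \<in> S then d j / real u else if j = 1 then (real u - (\<Sum>i\<in>S. d i)) / real u else 0)" for j
  define mu where "mu j = (if j \<in> ?R then - d j / real t else if j = 1 then (real t + (\<Sum>i\<in>?R. d i)) / real t else 0)" for j
  have l1: "\<forall>j. 0 \<le> lam j" unfolding lam_def using sgS sU u' by auto
  have l2: "\<forall>j. j \<notin> insert 1 S \<longrightarrow> lam j = 0" unfolding lam_def by auto
  have l3: "sum lam (insert 1 S) = 1"
  proof -
    have "sum lam (insert 1 S) = lam 1 + sum lam S" using finS S1 by simp
    also have "sum lam S = (\<Sum>i\<in>S. d i / real u)" unfolding lam_def by (intro sum.cong) auto
    also have "\<dots> = (\<Sum>i\<in>S. d i) / real u" by (simp add: sum_divide_distrib)
    finally show ?thesis unfolding lam_def using S1 u' by (simp add: field_simps)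
  qed
  have m1: "\<forall>j. 0 \<le> mu j"
  proof
    fix j show "0 \<le> mu j"
    proof (cases "j \<in> ?R")
      case True
      then have "d j \<le> 0" using sgR by blast
      then have "d j / real t \<le> 0" using u' by (simp add: divide_nonpos_pos)
      then show ?thesis unfolding mu_def using True by simp
    next
      case False
      have "0 \<le> (real t + (\<Sum>i\<in>?R. d i)) / real t" using sV u' by simp
      then show ?thesis unfolding mu_def if_not_P[OF False] by simp
    qed
  qed
  have m2: "\<forall>j. j \<notin> ground n - S \<longrightarrow> mu j = 0" unfolding mu_def Tsplit by auto
  have m3: "sum mu (ground n - S) = 1"
  proof -
    have "sum mu (ground n - S) = mu 1 + sum mu ?R" unfolding Tsplit using finR R1 by simp
    also have "sum mu ?R = (\<Sum>i\<in>?R. - d i / real t)" unfolding mu_def by (intro sum.cong) auto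
    also have "\<dots> = - (\<Sum>i\<in>?R. d i) / real t" by (simp add: sum_divide_distrib sum_negf)
    finally show ?thesis unfolding mu_def using R1 u' by (simp add: field_simps)
  qed
  have sT2: "(\<Sum>i\<in>ground n. d i) = d 1 + (\<Sum>i\<in>S. d i) + (\<Sum>i\<in>?R. d i)"
  proof -
    have n1R: "1 \<notin> S \<union> ?R" using S1 R1 by blast
    have "sum d (insert 1 (S \<union> ?R)) = d 1 + sum d (S \<union> ?R)" by (rule sum.insert[OF _ n1R]) (simp add: finS)
    also have "sum d (S \<union> ?R) = sum d S + sum d ?R" by (rule sum.union_disjoint[OF finS finR SR])
    finally show ?thesis unfolding gsplit by simp
  qed
  have Bg: "B \<subseteq> ground n" using mb_sub[OF mb B] .
  have eq: "x = (\<lambda>j. real u * lam j + indic B j - real t * mu j)"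
  proof
    fix j
    consider "j \<in> S" | "j \<in> ?R" | "j = 1" | "j \<notin> ground n" using gsplit by blast
    then show "x j = real u * lam j + indic B j - real t * mu j"
    proof cases
      case 1
      then have "j \<notin> ?R" "j \<noteq> 1" using S1 by auto
      then show ?thesis unfolding lam_def mu_def d_def using 1 u' by auto
    next
      case 2 then have "j \<notin> S" "j \<noteq> 1" by auto
      then show ?thesis unfolding lam_def mu_def d_def using 2 u' by auto
    next
      case 3
      have "real u * lam 1 = real u - (\<Sum>i\<in>S. d i)" unfolding lam_def using S1 u' by simp
      moreover have "real t * mu 1 = real t + (\<Sum>i\<in>?R. d i)" unfolding mu_def using R1 u' by simp
      ultimately show ?thesis using 3 sT sT2 unfolding d_def by simp
    next
      case 4
      then have "j \<notin> S" "j \<notin> ?R" "j \<noteq> 1" "j \<notin> B" using gsplit Bg by auto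
      then have lm: "lam j = 0" unfolding lam_def by simp
      have "mu j = (if j = 1 then (real t + (\<Sum>i\<in>?R. d i)) / real t else 0)"
        unfolding mu_def by (rule if_not_P) (use \<open>j \<notin> ?R\<close> in blast)
      then have mm: "mu j = 0" using \<open>j \<noteq> 1\<close> by simp
      show ?thesis using lm mm x0 4 \<open>j \<notin> B\<close> by (simp add: indic_def)
    qed
  qed
  show ?thesis unfolding eq by (rule cell_pt[OF l1 l2 l3 m1 m2 m3])
qed

end

lemma chain_mono:
  assumes h: "\<forall>i\<in>{1..<N}. f i < f (Suc i)"
  shows "1 \<le> i \<Longrightarrow> i < j \<Longrightarrow> j \<le> N \<Longrightarrow> (f i :: real) < f j"
proof (induction j)
  case 0 then show ?case by simp
next
  case (Suc j)
  show ?case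
  proof (cases "i = j")
    case True then show ?thesis using h Suc.prems by auto
  next
    case False
    then have "f i < f j" using Suc by simp
    moreover have "f j < f (Suc j)" using h Suc.prems False by auto
    ultimately show ?thesis by simp
  qed
qed

lemma simplex_props:
  assumes a: "a \<in> simplex n"
  shows "\<forall>j. 0 \<le> a j" "(\<Sum>j\<in>ground n. a j) = 1" "\<forall>j. j \<notin> ground n \<longrightarrow> a j = 0"
proof -
  show "\<forall>j. 0 \<le> a j" using conv_nonneg[OF a[unfolded simplex_def]] by (auto simp: unitv_def)
  show "(\<Sum>j\<in>ground n. a j) = 1"
  proof (rule conv_sum[OF a[unfolded simplex_def]], rule ballI)
    fix v assume "v \<in> unitv ` ground n"
    then obtain i where i: "i \<in> ground n" "v = unitv i" by blast
    show "(\<Sum>j\<in>ground n. v j) = 1" using dot_unitv[OF i(1), of "\<lambda>_. 1" 1] i by simp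
  qed
  show "\<forall>j. j \<notin> ground n \<longrightarrow> a j = 0"
  proof (intro allI impI)
    fix j assume j: "j \<notin> ground n"
    show "a j = 0" by (rule conv_pt[OF a[unfolded simplex_def]]) (use j in \<open>auto simp: unitv_def\<close>)
  qed
qed

theorem mainTheorem6:
  fixes n t u :: nat and \<B> :: "nat set set" and \<alpha> \<beta> :: "nat \<Rightarrow> real" and x :: "nat \<Rightarrow> real"
  assumes "matroid_bases n \<B>"
    and "t > 0" and "u > 0"
    and "0 < \<alpha> 1" and "\<forall>i\<in>{1..<n}. \<alpha> i < \<alpha> (Suc i)"
    and "0 < \<beta> 1" and "\<forall>i\<in>{1..<n}. \<beta> i < \<beta> (Suc i)"
    and "x \<in> mixed_polytope n \<B> t u"
    and "\<forall>i\<in>ground n. x i \<in> \<int>"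
  shows "\<exists>C. top_degree_face n \<B> t u \<alpha> \<beta> C \<and> x \<in> C"
proof -
  note mb = assms(1)
  obtain y b where yb: "y \<in> msum (scale_set (real u) (simplex n)) (matroid_polytope \<B>)"
    "b \<in> scale_set (- real t) (simplex n)" "x = (\<lambda>i. y i + b i)"
    using assms(8) unfolding mixed_polytope_def msum_def by blast
  obtain a' p where ap: "a' \<in> scale_set (real u) (simplex n)" "p \<in> matroid_polytope \<B>" "y = (\<lambda>i. a' i + p i)"
    using yb(1) unfolding msum_def by blast
  obtain a where a: "a \<in> simplex n" "a' = (\<lambda>i. real u * a i)" using ap(1) unfolding scale_set_def by blast
  obtain b0 where b0: "b0 \<in> simplex n" "b = (\<lambda>i. - real t * b0 i)" using yb(2) unfolding scale_set_def by blast
  have xe: "\<forall>i. x i = real u * a i + p i - real t * b0 i" using yb(3) ap(3) a(2) b0(2) by simp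
  note sa = simplex_props[OF a(1)] and sb = simplex_props[OF b0(1)]
  have n1: "1 \<le> n"
  proof (rule ccontr)
    assume "\<not> 1 \<le> n"
    then have "ground n = {}" by (auto simp: ground_def)
    then show False using sa(2) by simp
  qed
  have p0: "\<forall>j. j \<notin> ground n \<longrightarrow> p j = 0"
  proof (intro allI impI)
    fix j assume j: "j \<notin> ground n"
    show "p j = 0"
    proof (rule conv_pt[OF ap(2)[unfolded matroid_polytope_def]], rule ballI)
      fix v assume "v \<in> indic ` \<B>"
      then obtain D where "D \<in> \<B>" "v = indic D" by blast
      then show "v j = 0" using mb_sub[OF mb] j by (auto simp: indic_def)
    qed
  qed
  have x0: "\<forall>j. j \<notin> ground n \<longrightarrow> x j = 0" using xe sa(3) sb(3) p0 by simp
  have Qh: "Qh n \<B> x (real u) (real t)"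
  proof -
    from conv_rep[OF ap(2)[unfolded matroid_polytope_def]] obtain Sv c where Sv: "finite Sv" "Sv \<subseteq> indic ` \<B>" "Sv \<noteq> {}"
      "\<forall>a\<in>Sv. c a \<ge> 0" "sum c Sv = 1" "p = (\<lambda>i. \<Sum>a\<in>Sv. c a * a i)" .
    define f where "f v = (SOME D. D \<in> \<B> \<and> v = indic D)" for v
    have fv: "f v \<in> \<B> \<and> v = indic (f v)" if "v \<in> Sv" for v
    proof -
      have "\<exists>D. D \<in> \<B> \<and> v = indic D" using Sv(2) that by blast
      then show ?thesis unfolding f_def by (rule someI_ex)
    qed
    have rp: "rep \<B> Sv c f" unfolding rep_def using Sv fv by blast
    have pp: "pt Sv c f = p" unfolding pt_def Sv(6) using fv by (auto intro!: sum.cong)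
    have d: "x i - p i = real u * a i - real t * b0 i" for i using xe by simp
    have q1: "(\<Sum>i\<in>ground n. max (x i - p i) 0) \<le> real u"
    proof -
      have "(\<Sum>i\<in>ground n. max (x i - p i) 0) \<le> (\<Sum>i\<in>ground n. real u * a i)"
        using sa(1) sb(1) d by (intro sum_mono) (auto simp: mult_nonneg_nonneg)
      also have "\<dots> = real u" using sa(2) by (simp add: sum_distrib_left[symmetric])
      finally show ?thesis .
    qed
    have q2: "(\<Sum>i\<in>ground n. max (p i - x i) 0) \<le> real t"
    proof -
      have "(\<Sum>i\<in>ground n. max (p i - x i) 0) \<le> (\<Sum>i\<in>ground n. real t * b0 i)"
      proof (rule sum_mono)
        fix i
        have "0 \<le> real u * a i" "0 \<le> real t * b0 i" using sa(1) sb(1) by auto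
        then show "max (p i - x i) 0 \<le> real t * b0 i" using d[of i] by linarith
      qed
      also have "\<dots> = real t" using sb(2) by (simp add: sum_distrib_left[symmetric])
      finally show ?thesis .
    qed
    have "(\<Sum>i\<in>ground n. x i - p i) = (\<Sum>i\<in>ground n. real u * a i - real t * b0 i)"
      using d by (intro sum.cong) auto
    also have "\<dots> = real u * (\<Sum>i\<in>ground n. a i) - real t * (\<Sum>i\<in>ground n. b0 i)"
      by (simp only: sum_subtractf sum_distrib_left)
    finally have q3: "(\<Sum>i\<in>ground n. x i - p i) = real u - real t" using sa(2) sb(2) by simp
    have "rep \<B> Sv c f \<and> Qc n x (real u) (real t) (pt Sv c f)" unfolding Qc_def pp using rp q1 q2 q3 by simp
    then show ?thesis unfolding Qh_def by blast
  qed
  have am: "\<And>i j. 1 \<le> i \<Longrightarrow> i < j \<Longrightarrow> j \<le> n \<Longrightarrow> \<alpha> i < \<alpha> j"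
    using chain_mono[OF assms(5)] by blast
  have bm: "\<And>i j. 1 \<le> i \<Longrightarrow> i < j \<Longrightarrow> j \<le> n \<Longrightarrow> \<beta> i < \<beta> j"
    using chain_mono[OF assms(7)] by blast
  have u': "real u > 0" "real t > 0" using assms(2,3) by auto
  have exSB: "\<exists>S B. sg n x (real u) (real t) S B \<and> B \<in> \<B> \<and>
    (\<forall>D\<in>\<B>. D \<noteq> B \<longrightarrow> sum (Wt \<alpha> \<beta> (real u) (real t) S) D < sum (Wt \<alpha> \<beta> (real u) (real t) S) B)"
    by (rule CL[where \<alpha>=\<alpha> and \<beta>=\<beta> and u="real u" and t="real t" and N=n, OF u'(1) u'(2) am bm le_refl mb assms(9) Qh])
  then obtain S B where SB: "sg n x (real u) (real t) S B" "B \<in> \<B>"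
    "\<forall>D\<in>\<B>. D \<noteq> B \<longrightarrow> sum (Wt \<alpha> \<beta> (real u) (real t) S) D < sum (Wt \<alpha> \<beta> (real u) (real t) S) B"
    by blast
  have Ssub: "S \<subseteq> {2..n}" using SB(1) unfolding sg_def by blast
  interpret g: geo n t u \<B> \<alpha> \<beta> S B
    by (rule geo.intro[OF mb assms(2) assms(3) n1 am bm Ssub SB(2) SB(3)])
  let ?w = "Wt \<alpha> \<beta> (real u) (real t) S"
  let ?C = "cell n \<B> t u \<alpha> \<beta> ?w"
  have xC: "x \<in> ?C" by (rule g.x_in[OF SB(1) x0])
  have "top_degree_face n \<B> t u \<alpha> \<beta> ?C"
    unfolding top_degree_face_def subdivision_def
  proof (intro conjI)
    show "?C \<in> range (cell n \<B> t u \<alpha> \<beta>)" by blast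
    show "\<forall>C'\<in>range (cell n \<B> t u \<alpha> \<beta>). ?C \<subseteq> C' \<longrightarrow> C' = ?C" using g.maximal by blast
    show "\<exists>w. ?C = cell n \<B> t u \<alpha> \<beta> w \<and> (\<exists>B\<in>\<B>. cellG n \<B> w = {indic B})"
      using g.cellG_eq SB(2) by blast
  qed
  then show ?thesis using xC by blast
qed


end
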